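(* Let $M$ be an $n$-parameter module of finite total dimension, and let $F_\bullet\colon 0\to F_n\to\cdots\to F_1\to F_0$ be a free resolution of $M$ of length $n$ by finite-rank free modules. Fix chain contractions $s_{ij}$ of the complexes $\Omega_iF_\bullet$ for $0\le i<n$ (such contractions exist). Then the composite \[\varphi\colon F_0=\Omega_nF_0\xrightarrow{\;t_{n0n}\;}\Omega_0F_n\xrightarrow{\;\varepsilon_{F_n}\;}\nu F_n,\qquad t_{n0n}=s_{0,n-1}\kappa_{1,n-1}s_{1,n-2}\kappa_{2,n-2}\cdots s_{n-1,0}\kappa_{n,0},\] is a flat-injective presentation of $M$, i.e. $\operatorname{im}\varphi\cong M$.
   Context: Fix a field $k$ and $n\ge1$. An $n$-parameter module is a functor $M$ from the poset $\mathbb{Z}^n$ to $k$-vector spaces; its total dimension is $\sum_z\dim_k M_z$. Put $\mathbf 1=(1,\dots,1)$. Basic modules and classes: - For $z\in(\mathbb{Z}\cup\{-\infty\})^n$, $F(z)_v=k$ if $z\le v$ and $0$ otherwise. For $z\in(\mathbb{Z}\cup\{\infty\})^n$, $I(z)_v=k$ if $v\le z$ and $0$ otherwise. Structure maps are the identity between nonzero components. - Flat (resp. free, injective) modules are direct sums of modules $F(z)$ (resp. $F(z)$ with $z\in\mathbb{Z}^n$, resp. $I(z)$). - A free resolution of $M$ is an exact complex $\cdots\to F_1\to F_0$ of free modules with a surjection $F_0\to M$ whose kernel is $\operatorname{im}(F_1\to F_0)$. - A flat-injective presentation of $M$ is a morphism $\varphi\colon F\to I$ with $F$ flat, $I$ injective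 and $\operatorname{im}\varphi\cong M$. Operations on modules: - Tensor product: $(M\otimes N)_z=\bigl(\bigoplus_{v+w=z}M_v\otimes_kN_w\bigr)/\!\sim$, where $\sim$ is generated by $M_{v,v-u}(m)\otimes x\sim m\otimes N_{w,w-u}(x)$ for $u\ge0$. - Matlis dual: $(M^* )_z=\operatorname{Hom}_k(M_{-z},k)$. - Global dual: $(M^\dagger)_z=\operatorname{Hom}(M,F(-z))$. - Shift: $M\langle z\rangle_w=M_{w+z}$. - Nakayama functor: $\nu M=(M^\dagger)^*\langle\mathbf 1\rangle$. Čech complex: with $e_Q$ the vector having $-\infty$ at coordinates in $Q\subseteq\{1,\dots,n\}$ and $0$ elsewhere, - $\Omega_d=\bigoplus_{|Q|=n-d}F(e_Q)$ for $0\le d\le n$; - $\kappa_d\colon\Omega_d\to\Omega_{d-1}$ has component $F(e_Q)\to F(e_{Q\cup\{q\}})$ equal to $(-1)^{|\{p\in Q:p<q\}|}$ times the inclusion. Note $\Omega_n=F(0)$, so $\Omega_n\otimes F_0\cong F_0$. Double complex: $\Omega_iF_j=\Omega_i\otimes F_j$, $\kappa_{ij}=\kappa_i\otimes\mathrm{id}_{F_j}$ and $\partial_{ij}=\mathrm{id}\otimes\partial^F_j$. A chain contraction of $\Omega_iF_\bullet$ is a family $s_{ij}\colon\Omega_iF_j\to\Omega_iF_{j+1}$ with $\partial_{i,j+1}s_{ij}+s_{i,j-1}\partial_{ij}=\mathrm{id}$. Augmentation: $\varepsilon\colon\Omega_0=F(-\infty,\dots,-\infty)\to I(-\mathbf 1)$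 is the identity in components $z\le-\mathbf 1$. Then $\varepsilon_{F_n}\colon\Omega_0\otimes F_n\to\nu F_n$ is $\varepsilon\otimes F_n$ composed with the natural isomorphism $I(-\mathbf 1)\otimes F_n\cong\nu F_n$. *)

theory Defs
  imports Main "HOL-Library.Cardinality"
begin

text \<open>Points of Z^n are functions 'n => int (n = CARD('n)), ordered pointwise.
A module assigns to each point z a k-subspace of the vector space of
functions 'x => 'k (every k-vector space embeds in such a space), together
with structure maps mp u w for u <= w.\<close>

type_synonym 'n pt = "'n \<Rightarrow> int"

record ('n, 'x, 'k) pmod =
  sp :: "('n \<Rightarrow> int) \<Rightarrow> ('x \<Rightarrow> 'k) set"
  mp :: "('n \<Rightarrow> int) \<Rightarrow> ('n \<Rightarrow> int) \<Rightarrow> ('x \<Rightarrow> 'k) \<Rightarrow> ('x \<Rightarrow> 'k)"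

definition vzero :: "'x \<Rightarrow> 'k::zero" where "vzero = (\<lambda>_. 0)"
definition vadd :: "('x \<Rightarrow> 'k::plus) \<Rightarrow> ('x \<Rightarrow> 'k) \<Rightarrow> ('x \<Rightarrow> 'k)" where
  "vadd f g = (\<lambda>x. f x + g x)"
definition vsmul :: "'k::times \<Rightarrow> ('x \<Rightarrow> 'k) \<Rightarrow> ('x \<Rightarrow> 'k)" where
  "vsmul c f = (\<lambda>x. c * f x)"

definition pm_subspace :: "('x \<Rightarrow> 'k::field) set \<Rightarrow> bool" where
  "pm_subspace S \<longleftrightarrow> vzero \<in> S \<and> (\<forall>u\<in>S. \<forall>v\<in>S. vadd u v \<in> S) \<and> (\<forall>c. \<forall>u\<in>S. vsmul c u \<in> S)"

definition pm_linear :: "('x \<Rightarrow> 'k::field) set \<Rightarrow> ('y \<Rightarrow> 'k) set \<Rightarrow> (('x \<Rightarrow> 'k) \<Rightarrow> ('y \<Rightarrow> 'k)) \<Rightarrow> bool" where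
  "pm_linear S T f \<longleftrightarrow> (\<forall>u\<in>S. f u \<in> T) \<and> (\<forall>u\<in>S. \<forall>v\<in>S. f (vadd u v) = vadd (f u) (f v))
     \<and> (\<forall>c. \<forall>u\<in>S. f (vsmul c u) = vsmul c (f u))"

definition pmodule :: "('n, 'x, 'k::field) pmod \<Rightarrow> bool" where
  "pmodule M \<longleftrightarrow> (\<forall>z. pm_subspace (sp M z))
     \<and> (\<forall>u w. u \<le> w \<longrightarrow> pm_linear (sp M u) (sp M w) (mp M u w))
     \<and> (\<forall>z. \<forall>x\<in>sp M z. mp M z z x = x)
     \<and> (\<forall>u v w. u \<le> v \<longrightarrow> v \<le> w \<longrightarrow> (\<forall>x\<in>sp M u. mp M v w (mp M u v x) = mp M u w x))"

definition pmor :: "('n, 'x, 'k::field) pmod \<Rightarrow> ('n, 'y, 'k) pmod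
     \<Rightarrow> ('n pt \<Rightarrow> ('x \<Rightarrow> 'k) \<Rightarrow> ('y \<Rightarrow> 'k)) \<Rightarrow> bool" where
  "pmor M N h \<longleftrightarrow> (\<forall>z. pm_linear (sp M z) (sp N z) (h z))
     \<and> (\<forall>u w. u \<le> w \<longrightarrow> (\<forall>x\<in>sp M u. h w (mp M u w x) = mp N u w (h u x)))"

definition pm_iso :: "('n, 'x, 'k::field) pmod \<Rightarrow> ('n, 'y, 'k) pmod \<Rightarrow> bool" where
  "pm_iso M N \<longleftrightarrow> (\<exists>h. pmor M N h \<and> (\<forall>z. bij_betw (h z) (sp M z) (sp N z)))"

definition pm_image :: "('n, 'x, 'k) pmod \<Rightarrow> ('n, 'y, 'k) pmod
     \<Rightarrow> ('n pt \<Rightarrow> ('x \<Rightarrow> 'k) \<Rightarrow> ('y \<Rightarrow> 'k)) \<Rightarrow> ('n, 'y, 'k) pmod" where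
  "pm_image M N h = \<lparr> sp = (\<lambda>z. h z ` sp M z), mp = mp N \<rparr>"

definition pm_span :: "('x \<Rightarrow> 'k::field) set \<Rightarrow> ('x \<Rightarrow> 'k) set" where
  "pm_span B = {(\<lambda>x. \<Sum>b\<in>B. c b * b x) | c. True}"

text \<open>Finite total dimension: sum over z of dim M_z is finite, i.e. only finitely
many M_z are nonzero and each is finite-dimensional.\<close>
definition finite_total_dim :: "('n, 'x, 'k::field) pmod \<Rightarrow> bool" where
  "finite_total_dim M \<longleftrightarrow> finite {z. sp M z \<noteq> {vzero}}
     \<and> (\<forall>z. \<exists>B. finite B \<and> B \<subseteq> sp M z \<and> pm_span B = sp M z)"

text \<open>Extended points: None stands for -infinity (lower bounds) resp. +infinity (upper bounds).\<close>
definition lower_le :: "('n \<Rightarrow> int option) \<Rightarrow> 'n pt \<Rightarrow> bool" where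
  "lower_le b z \<longleftrightarrow> (\<forall>p. case b p of None \<Rightarrow> True | Some a \<Rightarrow> a \<le> z p)"

definition upper_ge :: "('n \<Rightarrow> int option) \<Rightarrow> 'n pt \<Rightarrow> bool" where
  "upper_ge c z \<longleftrightarrow> (\<forall>p. case c p of None \<Rightarrow> True | Some a \<Rightarrow> z p \<le> a)"

text \<open>Direct sum over x in X of F(b x), resp. of I(c x).\<close>
definition flat_sum :: "('x \<Rightarrow> 'n \<Rightarrow> int option) \<Rightarrow> 'x set \<Rightarrow> ('n, 'x, 'k::zero) pmod" where
  "flat_sum b X = \<lparr> sp = (\<lambda>z. {v. \<forall>x. (x \<notin> X \<or> \<not> lower_le (b x) z) \<longrightarrow> v x = 0}),
                    mp = (\<lambda>u w v. v) \<rparr>"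

definition inj_sum :: "('x \<Rightarrow> 'n \<Rightarrow> int option) \<Rightarrow> 'x set \<Rightarrow> ('n, 'x, 'k::zero) pmod" where
  "inj_sum c X = \<lparr> sp = (\<lambda>z. {v. \<forall>x. (x \<notin> X \<or> \<not> upper_ge (c x) z) \<longrightarrow> v x = 0}),
                   mp = (\<lambda>u w v. (\<lambda>x. if upper_ge (c x) w then v x else 0)) \<rparr>"

text \<open>gens j is the list of generator degrees of the finite-rank free module F_j.\<close>
definition freeF :: "(nat \<Rightarrow> 'n pt list) \<Rightarrow> nat \<Rightarrow> ('n, nat, 'k::zero) pmod" where
  "freeF gens j = flat_sum (\<lambda>l p. Some ((gens j ! l) p)) {..<length (gens j)}"

definition free_resolution :: "('n, 'b, 'k::field) pmod \<Rightarrow> nat \<Rightarrow> (nat \<Rightarrow> 'n pt list)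
   \<Rightarrow> (nat \<Rightarrow> 'n pt \<Rightarrow> (nat \<Rightarrow> 'k) \<Rightarrow> (nat \<Rightarrow> 'k)) \<Rightarrow> ('n pt \<Rightarrow> (nat \<Rightarrow> 'k) \<Rightarrow> ('b \<Rightarrow> 'k)) \<Rightarrow> bool" where
  "free_resolution M len gens d aug \<longleftrightarrow>
     pmor (freeF gens 0) M aug
   \<and> (\<forall>z. aug z ` sp (freeF gens 0) z = sp M z)
   \<and> (\<forall>j. 1 \<le> j \<and> j \<le> len \<longrightarrow> pmor (freeF gens j) (freeF gens (j - 1)) (d j))
   \<and> (\<forall>z. {x \<in> sp (freeF gens 0) z. aug z x = vzero} = d 1 z ` sp (freeF gens 1) z)
   \<and> (\<forall>j z. 1 \<le> j \<and> j < len \<longrightarrow>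
        {x \<in> sp (freeF gens j) z. d j z x = vzero} = d (Suc j) z ` sp (freeF gens (Suc j)) z)
   \<and> (\<forall>z. {x \<in> sp (freeF gens len) z. d len z x = vzero} = {vzero})"

text \<open>Omega_i (x) F_j = (+)_{|Q| = n-i} (+)_l F(e_Q) (x) F(g_l) = (+)_{Q,l} F(e_Q + g_l),
indexed by pairs (Q, l).\<close>
definition OmegaF :: "(nat \<Rightarrow> 'n::finite pt list) \<Rightarrow> nat \<Rightarrow> nat \<Rightarrow> ('n, 'n set \<times> nat, 'k::zero) pmod" where
  "OmegaF gens i j = flat_sum (\<lambda>(Q, l) p. if p \<in> Q then None else Some ((gens j ! l) p))
      {(Q, l). card Q = CARD('n) - i \<and> l < length (gens j)}"

definition cech_sign :: "'n::linorder set \<Rightarrow> 'n \<Rightarrow> 'k::comm_ring_1" where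
  "cech_sign Q q = (-1) ^ card {p \<in> Q. p < q}"

text \<open>kappa_ij = kappa_i (x) id_{F_j} : Omega_i F_j -> Omega_(i-1) F_j.\<close>
definition kappaF :: "(nat \<Rightarrow> 'n::{finite,linorder} pt list) \<Rightarrow> nat \<Rightarrow> nat \<Rightarrow> 'n pt
     \<Rightarrow> ('n set \<times> nat \<Rightarrow> 'k::field) \<Rightarrow> ('n set \<times> nat \<Rightarrow> 'k)" where
  "kappaF gens i j z v = (\<lambda>(Q, l). if card Q = CARD('n) - i + 1 \<and> l < length (gens j)
       then (\<Sum>q\<in>Q. cech_sign (Q - {q}) q * v (Q - {q}, l)) else 0)"

definition dmat :: "(nat \<Rightarrow> 'n pt list) \<Rightarrow> (nat \<Rightarrow> 'n pt \<Rightarrow> (nat \<Rightarrow> 'k::field) \<Rightarrow> (nat \<Rightarrow> 'k))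
     \<Rightarrow> nat \<Rightarrow> nat \<Rightarrow> nat \<Rightarrow> 'k" where
  "dmat gens d j m l = d j (gens j ! l) (\<lambda>l'. if l' = l then 1 else 0) m"

text \<open>partial_ij = id_{Omega_i} (x) d_j : Omega_i F_j -> Omega_i F_(j-1).\<close>
definition dOmega :: "(nat \<Rightarrow> 'n::finite pt list) \<Rightarrow> (nat \<Rightarrow> 'n pt \<Rightarrow> (nat \<Rightarrow> 'k::field) \<Rightarrow> (nat \<Rightarrow> 'k))
     \<Rightarrow> nat \<Rightarrow> nat \<Rightarrow> 'n pt \<Rightarrow> ('n set \<times> nat \<Rightarrow> 'k) \<Rightarrow> ('n set \<times> nat \<Rightarrow> 'k)" where
  "dOmega gens d i j z v = (\<lambda>(Q, m). if card Q = CARD('n) - i \<and> m < length (gens (j - 1))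
       then (\<Sum>l<length (gens j). dmat gens d j m l * v (Q, l)) else 0)"

definition chain_contraction :: "(nat \<Rightarrow> 'n::finite pt list) \<Rightarrow> (nat \<Rightarrow> 'n pt \<Rightarrow> (nat \<Rightarrow> 'k::field) \<Rightarrow> (nat \<Rightarrow> 'k))
     \<Rightarrow> (nat \<Rightarrow> nat \<Rightarrow> 'n pt \<Rightarrow> ('n set \<times> nat \<Rightarrow> 'k) \<Rightarrow> ('n set \<times> nat \<Rightarrow> 'k)) \<Rightarrow> nat \<Rightarrow> bool" where
  "chain_contraction gens d s i \<longleftrightarrow>
     (\<forall>j<CARD('n). pmor (OmegaF gens i j) (OmegaF gens i (Suc j)) (s i j))
   \<and> (\<forall>j\<le>CARD('n). \<forall>z. \<forall>x\<in>sp (OmegaF gens i j) z.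
        x = vadd (if j < CARD('n) then dOmega gens d i (Suc j) z (s i j z x) else vzero)
                 (if 0 < j then s i (j - 1) z (dOmega gens d i j z x) else vzero))"

text \<open>tcomp m : Omega_n F_0 -> Omega_(n-m) F_m, the partial composite
s_(n-m,m-1) kappa_(n-m+1,m-1) ... s_(n-1,0) kappa_(n,0); tcomp n = t_n0n.\<close>
primrec tcomp :: "(nat \<Rightarrow> 'n::{finite,linorder} pt list)
     \<Rightarrow> (nat \<Rightarrow> nat \<Rightarrow> 'n pt \<Rightarrow> ('n set \<times> nat \<Rightarrow> 'k::field) \<Rightarrow> ('n set \<times> nat \<Rightarrow> 'k))
     \<Rightarrow> nat \<Rightarrow> 'n pt \<Rightarrow> ('n set \<times> nat \<Rightarrow> 'k) \<Rightarrow> ('n set \<times> nat \<Rightarrow> 'k)" where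
  "tcomp gens s 0 = (\<lambda>z v. v)"
| "tcomp gens s (Suc m) = (\<lambda>z v. s (CARD('n) - Suc m) m z (kappaF gens (CARD('n) - m) m z (tcomp gens s m z v)))"

text \<open>Identification F_0 = Omega_n (x) F_0 (Omega_n = F(0), the summand with Q = {}).\<close>
definition iotaF :: "'n pt \<Rightarrow> (nat \<Rightarrow> 'k::zero) \<Rightarrow> ('n set \<times> nat \<Rightarrow> 'k)" where
  "iotaF z x = (\<lambda>(Q, l). if Q = {} then x l else 0)"

text \<open>nu F_n = (+)_l nu F(g_l) = (+)_l I(g_l - 1), with n = CARD('n).\<close>
definition nuF :: "(nat \<Rightarrow> 'n::finite pt list) \<Rightarrow> ('n, nat, 'k::zero) pmod" where
  "nuF gens = inj_sum (\<lambda>l p. Some ((gens (CARD('n)) ! l) p - 1)) {..<length (gens (CARD('n)))}"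

text \<open>epsilon_{F_n} : Omega_0 F_n = (+)_l F(-oo) -> nu F_n, identity on components that are nonzero
in the target (Omega_0 is the summand Q = UNIV).\<close>
definition epsF :: "(nat \<Rightarrow> 'n::finite pt list) \<Rightarrow> 'n pt \<Rightarrow> ('n set \<times> nat \<Rightarrow> 'k::zero) \<Rightarrow> (nat \<Rightarrow> 'k)" where
  "epsF gens z v = (\<lambda>l. if l < length (gens (CARD('n)))
        \<and> upper_ge (\<lambda>p. Some ((gens (CARD('n)) ! l) p - 1)) z then v (UNIV, l) else 0)"

definition phiF :: "(nat \<Rightarrow> 'n::{finite,linorder} pt list)
     \<Rightarrow> (nat \<Rightarrow> nat \<Rightarrow> 'n pt \<Rightarrow> ('n set \<times> nat \<Rightarrow> 'k::field) \<Rightarrow> ('n set \<times> nat \<Rightarrow> 'k))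
     \<Rightarrow> 'n pt \<Rightarrow> (nat \<Rightarrow> 'k) \<Rightarrow> (nat \<Rightarrow> 'k)" where
  "phiF gens s z x = epsF gens z (tcomp gens s (CARD('n)) z (iotaF z x))"

end

theory Submission
  imports Defs "HOL-Library.Function_Algebras"
begin

lemma vadd_eq: "vadd f g = f + g" by (auto simp: vadd_def)
lemma vzero_eq: "vzero = 0" by (auto simp: vzero_def)

lemma lower_le_Q: "lower_le (\<lambda>p. if p \<in> Q then None else Some (g p)) z \<longleftrightarrow> (\<forall>p. p \<notin> Q \<longrightarrow> g p \<le> z p)"
  unfolding lower_le_def by (metis (mono_tags, lifting) option.simps(4,5))

context fixes gens :: "nat \<Rightarrow> ('n::{finite,linorder} \<Rightarrow> int) list" begin

lemma sp_OmegaF: "v \<in> sp (OmegaF gens i j) z \<longleftrightarrow>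
  (\<forall>Q l. v (Q,l) \<noteq> 0 \<longrightarrow> card Q = CARD('n) - i \<and> l < length (gens j) \<and> (\<forall>p. p \<notin> Q \<longrightarrow> (gens j ! l) p \<le> z p))"
proof -
  have "v \<in> sp (OmegaF gens i j) z \<longleftrightarrow> (\<forall>Q l. v (Q,l) \<noteq> 0 \<longrightarrow> (card Q = CARD('n) - i \<and> l < length (gens j)) \<and>
     lower_le (\<lambda>p. if p \<in> Q then None else Some ((gens j ! l) p)) z)"
    unfolding OmegaF_def flat_sum_def by auto
  then show ?thesis unfolding lower_le_Q by blast
qed

lemma sp_freeF: "y \<in> sp (freeF gens j) z \<longleftrightarrow> (\<forall>l. y l \<noteq> 0 \<longrightarrow> l < length (gens j) \<and> gens j ! l \<le> z)"
  unfolding freeF_def flat_sum_def lower_le_def le_fun_def by auto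

lemma sp_nuF: "y \<in> sp (nuF gens) z \<longleftrightarrow> (\<forall>l. y l \<noteq> 0 \<longrightarrow> l < length (gens CARD('n)) \<and> (\<forall>p. z p < (gens CARD('n) ! l) p))"
  unfolding nuF_def inj_sum_def upper_ge_def by auto

end

lemma cs_remove_less: "finite Q \<Longrightarrow> q \<in> Q \<Longrightarrow> q < x \<Longrightarrow> cech_sign (Q - {q}) x = - (cech_sign Q x :: 'k::comm_ring_1)"
proof -
  assume a: "finite Q" "q \<in> Q" "q < x"
  have e: "{p \<in> Q - {q}. p < x} = {p \<in> Q. p < x} - {q}" by auto
  have "q \<in> {p \<in> Q. p < x}" using a by auto
  moreover have "finite {p \<in> Q. p < x}" using a by auto
  ultimately have c: "card {p \<in> Q. p < x} = Suc (card ({p \<in> Q. p < x} - {q}))"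
    by (metis card_Suc_Diff1)
  show ?thesis unfolding cech_sign_def e using c by simp
qed

lemma cs_remove_ge: "\<not> q < x \<Longrightarrow> cech_sign (Q - {q}) x = cech_sign Q x"
proof -
  assume "\<not> q < x"
  then have "{p \<in> Q - {q}. p < x} = {p \<in> Q. p < x}" by auto
  then show ?thesis unfolding cech_sign_def by simp
qed

lemma cs_insert_less: "finite Q \<Longrightarrow> q \<notin> Q \<Longrightarrow> q < x \<Longrightarrow> cech_sign (insert q Q) x = - (cech_sign Q x :: 'k::comm_ring_1)"
proof -
  assume a: "finite Q" "q \<notin> Q" "q < x"
  have e: "{p \<in> insert q Q. p < x} = insert q {p \<in> Q. p < x}" using a by auto
  have "card (insert q {p \<in> Q. p < x}) = Suc (card {p \<in> Q. p < x})" using a by simp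
  then show ?thesis unfolding cech_sign_def e by simp
qed

lemma cs_insert_ge: "\<not> q < x \<Longrightarrow> cech_sign (insert q Q) x = cech_sign Q x"
proof -
  assume "\<not> q < x"
  then have "{p \<in> insert q Q. p < x} = {p \<in> Q. p < x}" by auto
  then show ?thesis unfolding cech_sign_def by simp
qed

lemma cs_sq: "cech_sign Q x * cech_sign Q x = (1::'k::comm_ring_1)"
  unfolding cech_sign_def by (simp add: power_mult_distrib[symmetric])

definition Kc :: "('n::{finite,linorder} set \<times> nat \<Rightarrow> 'k::field) \<Rightarrow> ('n set \<times> nat \<Rightarrow> 'k)" where
  "Kc v = (\<lambda>(Q,l). \<Sum>q\<in>Q. cech_sign (Q - {q}) q * v (Q - {q}, l))"

definition Hc :: "(nat \<Rightarrow> 'n option) \<Rightarrow> ('n::{finite,linorder} set \<times> nat \<Rightarrow> 'k::field) \<Rightarrow> ('n set \<times> nat \<Rightarrow> 'k)" where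
  "Hc c v = (\<lambda>(Q,l). case c l of None \<Rightarrow> 0 | Some q0 \<Rightarrow> if q0 \<in> Q then 0 else cech_sign Q q0 * v (insert q0 Q, l))"

lemma KK: "Kc (Kc v) = 0"
proof (rule ext, clarify)
  fix Q :: "'a set" and l
  define f where "f = (\<lambda>(q,q'). cech_sign (Q - {q}) q * (cech_sign (Q - {q} - {q'}) q' * v (Q - {q} - {q'}, l)))"
  have fin: "finite Q" by simp
  have "Kc (Kc v) (Q,l) = (\<Sum>q\<in>Q. \<Sum>q'\<in>Q - {q}. f (q,q'))"
    unfolding Kc_def f_def by (simp add: sum_distrib_left)
  also have "\<dots> = sum f (Sigma Q (\<lambda>q. Q - {q}))"
    using sum.Sigma[of Q "\<lambda>q. Q - {q}" "\<lambda>q q'. f (q,q')"] by (simp add: split_def)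
  also have "Sigma Q (\<lambda>q. Q - {q}) = {(q,q'). q \<in> Q \<and> q' \<in> Q \<and> q < q'} \<union> {(q,q'). q \<in> Q \<and> q' \<in> Q \<and> q' < q}"
    by auto
  also have "sum f \<dots> = sum f {(q,q'). q \<in> Q \<and> q' \<in> Q \<and> q < q'} + sum f {(q,q'). q \<in> Q \<and> q' \<in> Q \<and> q' < q}"
    by (rule sum.union_disjoint) auto
  also have "sum f {(q,q'). q \<in> Q \<and> q' \<in> Q \<and> q' < q} = sum (f \<circ> prod.swap) {(q,q'). q \<in> Q \<and> q' \<in> Q \<and> q < q'}"
  proof -
    have "{(q,q'). q \<in> Q \<and> q' \<in> Q \<and> q' < q} = prod.swap ` {(q,q'). q \<in> Q \<and> q' \<in> Q \<and> q < q'}"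
      by auto
    then show ?thesis by (simp add: sum.reindex)
  qed
  also have "sum f {(q,q'). q \<in> Q \<and> q' \<in> Q \<and> q < q'} + \<dots> = sum (\<lambda>x. f x + (f \<circ> prod.swap) x) {(q,q'). q \<in> Q \<and> q' \<in> Q \<and> q < q'}"
    by (simp add: sum.distrib)
  also have "\<dots> = 0"
  proof (rule sum.neutral, clarify)
    fix q q' assume a: "q \<in> Q" "q' \<in> Q" "q < q'"
    have e: "Q - {q'} - {q} = Q - {q} - {q'}" by auto
    have "cech_sign (Q - {q} - {q'}) q' = (cech_sign (Q - {q}) q' :: 'b)" by (rule cs_remove_ge) simp
    also have "\<dots> = - cech_sign Q q'" using a by (simp add: cs_remove_less)
    finally have 1: "cech_sign (Q - {q} - {q'}) q' = - (cech_sign Q q' :: 'b)" .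
    have 2: "cech_sign (Q - {q}) q = (cech_sign Q q :: 'b)" by (rule cs_remove_ge) simp
    have 3: "cech_sign (Q - {q'}) q' = (cech_sign Q q' :: 'b)" by (rule cs_remove_ge) simp
    have 4: "cech_sign (Q - {q'} - {q}) q = (cech_sign Q q :: 'b)"
      using a by (simp add: cs_remove_ge)
    show "f (q,q') + (f \<circ> prod.swap) (q,q') = 0"
      unfolding f_def using 1 2 3 4 e by (simp add: algebra_simps)
  qed
  finally show "Kc (Kc v) (Q,l) = 0 (Q,l)" by simp
qed


lemma KH: assumes c: "c l = Some q0"
  shows "Kc (Hc c v) (Q,l) + Hc c (Kc v) (Q,l) = (v (Q,l) :: 'k::field)"
proof (cases "q0 \<in> Q")
  case True
  have fin: "finite Q" by simp
  have "Kc (Hc c v) (Q,l) = (\<Sum>q\<in>Q. cech_sign (Q - {q}) q * (if q0 \<in> Q - {q} then 0 else cech_sign (Q - {q}) q0 * v (insert q0 (Q - {q}), l)))"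
    unfolding Kc_def Hc_def using c by simp
  also have "\<dots> = cech_sign (Q - {q0}) q0 * (cech_sign (Q - {q0}) q0 * v (insert q0 (Q - {q0}), l))
      + (\<Sum>q\<in>Q - {q0}. cech_sign (Q - {q}) q * (if q0 \<in> Q - {q} then 0 else cech_sign (Q - {q}) q0 * v (insert q0 (Q - {q}), l)))"
    using True fin by (simp add: sum.remove)
  also have "(\<Sum>q\<in>Q - {q0}. cech_sign (Q - {q}) q * (if q0 \<in> Q - {q} then 0 else cech_sign (Q - {q}) q0 * v (insert q0 (Q - {q}), l))) = 0"
    using True by (intro sum.neutral) auto
  also have "insert q0 (Q - {q0}) = Q" using True by auto
  finally have 1: "Kc (Hc c v) (Q,l) = v (Q,l)"
    by (simp add: mult.assoc[symmetric] cs_sq)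
  have 2: "Hc c (Kc v) (Q,l) = 0" unfolding Hc_def using c True by simp
  show ?thesis using 1 2 by simp
next
  case False
  have fin: "finite Q" by simp
  have 1: "Kc (Hc c v) (Q,l) = (\<Sum>q\<in>Q. cech_sign (Q - {q}) q * (cech_sign (Q - {q}) q0 * v (insert q0 Q - {q}, l)))"
  proof -
    have "Kc (Hc c v) (Q,l) = (\<Sum>q\<in>Q. cech_sign (Q-{q}) q * Hc c v (Q - {q}, l))" by (simp add: Kc_def)
    also have "\<dots> = (\<Sum>q\<in>Q. cech_sign (Q - {q}) q * (cech_sign (Q - {q}) q0 * v (insert q0 Q - {q}, l)))"
    proof (rule sum.cong[OF refl])
      fix q assume "q \<in> Q"
      then have "q0 \<notin> Q - {q}" "insert q0 (Q-{q}) = insert q0 Q - {q}" using False by auto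
      then show "cech_sign (Q-{q}) q * Hc c v (Q - {q}, l) = cech_sign (Q - {q}) q * (cech_sign (Q - {q}) q0 * v (insert q0 Q - {q}, l))"
        using False by (simp add: Hc_def c)
    qed
    finally show ?thesis .
  qed
  have e0: "insert q0 Q - {q0} = Q" using False by auto
  have 2: "Hc c (Kc v) (Q,l) = cech_sign Q q0 * (cech_sign Q q0 * v (Q,l)
       + (\<Sum>q\<in>Q. cech_sign (insert q0 Q - {q}) q * v (insert q0 Q - {q}, l)))"
  proof -
    have "Hc c (Kc v) (Q,l) = cech_sign Q q0 * Kc v (insert q0 Q, l)" by (simp add: Hc_def c False)
    also have "Kc v (insert q0 Q, l) = (\<Sum>q\<in>insert q0 Q. cech_sign (insert q0 Q - {q}) q * v (insert q0 Q - {q}, l))"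
      by (simp add: Kc_def)
    also have "\<dots> = cech_sign (insert q0 Q - {q0}) q0 * v (insert q0 Q - {q0}, l) + (\<Sum>q\<in>Q. cech_sign (insert q0 Q - {q}) q * v (insert q0 Q - {q}, l))"
      using sum.insert[OF fin False, of "\<lambda>q. cech_sign (insert q0 Q - {q}) q * v (insert q0 Q - {q}, l)"] by simp
    finally show ?thesis unfolding e0 .
  qed
  have 3: "(\<Sum>q\<in>Q. cech_sign (Q - {q}) q * (cech_sign (Q - {q}) q0 * v (insert q0 Q - {q}, l)))
      + cech_sign Q q0 * (\<Sum>q\<in>Q. cech_sign (insert q0 Q - {q}) q * v (insert q0 Q - {q}, l)) = 0"
    unfolding sum_distrib_left sum.distrib[symmetric]
  proof (rule sum.neutral, rule ballI)
    fix q assume q: "q \<in> Q"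
    then have qq: "q \<noteq> q0" using False by auto
    have a: "cech_sign (Q - {q}) q = (cech_sign Q q :: 'k)" by (rule cs_remove_ge) simp
    have b: "cech_sign (insert q0 Q - {q}) q = (cech_sign (insert q0 Q) q :: 'k)" by (rule cs_remove_ge) simp
    show "cech_sign (Q - {q}) q * (cech_sign (Q - {q}) q0 * v (insert q0 Q - {q}, l)) +
         cech_sign Q q0 * (cech_sign (insert q0 Q - {q}) q * v (insert q0 Q - {q}, l)) = 0"
    proof (cases "q < q0")
      case True
      have "cech_sign (Q - {q}) q0 = - (cech_sign Q q0 :: 'k)" using True q fin by (simp add: cs_remove_less)
      moreover have "cech_sign (insert q0 Q) q = (cech_sign Q q :: 'k)" using True by (simp add: cs_insert_ge)
      ultimately show ?thesis using a b by (simp add: algebra_simps)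
    next
      case F: False
      then have lt: "q0 < q" using qq by auto
      have "cech_sign (Q - {q}) q0 = (cech_sign Q q0 :: 'k)" using F by (simp add: cs_remove_ge)
      moreover have "cech_sign (insert q0 Q) q = - (cech_sign Q q :: 'k)" using lt False fin by (simp add: cs_insert_less)
      ultimately show ?thesis using a b by (simp add: algebra_simps)
    qed
  qed
  have 4: "cech_sign Q q0 * (cech_sign Q q0 * v (Q,l) + S) = v (Q,l) + cech_sign Q q0 * S" for S :: 'k
    by (simp add: distrib_left mult.assoc[symmetric] cs_sq)
  show ?thesis unfolding 1 2 4 using 3 by (simp add: algebra_simps)
qed


lemma flat_sp: "v \<in> sp (flat_sum b X) z \<longleftrightarrow> (\<forall>x. v x \<noteq> 0 \<longrightarrow> x \<in> X \<and> lower_le (b x) z)"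
  unfolding flat_sum_def by auto

lemma flat_mp: "mp (flat_sum b X) u w v = v" unfolding flat_sum_def by simp

lemma flat_zero: "(0 :: 'x \<Rightarrow> 'k::field) \<in> sp (flat_sum b X) z" by (simp add: flat_sp)
lemma flat_add: fixes v :: "'x \<Rightarrow> 'k::field" assumes "v \<in> sp (flat_sum b X) z" "w \<in> sp (flat_sum b X) z" shows "v + w \<in> sp (flat_sum b X) z"
  unfolding flat_sp
proof (intro allI impI)
  fix x assume "(v + w) x \<noteq> 0" then have "v x \<noteq> 0 \<or> w x \<noteq> 0" by auto
  then show "x \<in> X \<and> lower_le (b x) z" using assms unfolding flat_sp by blast
qed
lemma flat_diff: fixes v :: "'x \<Rightarrow> 'k::field" assumes "v \<in> sp (flat_sum b X) z" "w \<in> sp (flat_sum b X) z" shows "v - w \<in> sp (flat_sum b X) z"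
  unfolding flat_sp
proof (intro allI impI)
  fix x assume "(v - w) x \<noteq> 0" then have "v x \<noteq> 0 \<or> w x \<noteq> 0" by auto
  then show "x \<in> X \<and> lower_le (b x) z" using assms unfolding flat_sp by blast
qed
lemma flat_smul: "v \<in> sp (flat_sum b X) z \<Longrightarrow> (\<lambda>x. c * v x :: 'k::field) \<in> sp (flat_sum b X) z"
  by (simp add: flat_sp)
lemma flat_sum_mem: fixes f :: "'i \<Rightarrow> 'x \<Rightarrow> 'k::field" shows "finite I \<Longrightarrow> (\<And>i. i \<in> I \<Longrightarrow> f i \<in> sp (flat_sum b X) z) \<Longrightarrow> sum f I \<in> sp (flat_sum b X) z"
  by (induction I rule: finite_induct) (auto intro: flat_add flat_zero)

lemma pmor_mem: "pmor A B f \<Longrightarrow> x \<in> sp A z \<Longrightarrow> f z x \<in> sp B z"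
  unfolding pmor_def pm_linear_def by blast
lemma pmor_add: "pmor A B f \<Longrightarrow> x \<in> sp A z \<Longrightarrow> y \<in> sp A z \<Longrightarrow> f z (x + y) = f z x + f z y"
  unfolding pmor_def pm_linear_def vadd_eq by blast
lemma pmor_smul: "pmor A B f \<Longrightarrow> x \<in> sp A z \<Longrightarrow> f z (\<lambda>t. c * x t) = (\<lambda>t. c * f z x t)"
  unfolding pmor_def pm_linear_def vsmul_def by blast
lemma pmor_nat: "pmor A B f \<Longrightarrow> u \<le> w \<Longrightarrow> x \<in> sp A u \<Longrightarrow> f w (mp A u w x) = mp B u w (f u x)"
  unfolding pmor_def by blast

lemma pmor_flat_diff: fixes f :: "'n pt \<Rightarrow> ('x \<Rightarrow> 'k::field) \<Rightarrow> ('y \<Rightarrow> 'k)" assumes "pmor (flat_sum b X) B f" "x \<in> sp (flat_sum b X) z" "y \<in> sp (flat_sum b X) z"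
  shows "f z (x - y) = f z x - (f z y :: _ \<Rightarrow> 'k::field)"
proof -
  have m: "(\<lambda>t. (-1) * y t) \<in> sp (flat_sum b X) z" using assms(3) by (rule flat_smul)
  have e: "x - y = x + (\<lambda>t. (-1) * y t)" by (simp add: fun_eq_iff)
  have "f z (x - y) = f z x + f z (\<lambda>t. (-1) * y t)" unfolding e by (rule pmor_add[OF assms(1,2) m])
  also have "\<dots> = f z x + (\<lambda>t. (-1) * f z y t)" by (simp only: pmor_smul[OF assms(1,3)])
  finally show ?thesis by (simp add: fun_eq_iff)
qed

lemma pmor_flat_zero: fixes f :: "'n pt \<Rightarrow> ('x \<Rightarrow> 'k::field) \<Rightarrow> ('y \<Rightarrow> 'k)" assumes "pmor (flat_sum b X) B f" shows "f z 0 = (0 :: _ \<Rightarrow> 'k::field)"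
proof -
  have "f z (0 - 0) = f z 0 - f z 0" by (rule pmor_flat_diff[OF assms flat_zero flat_zero])
  then show ?thesis by (metis diff_self)
qed

lemma pmor_flat_sum: fixes f :: "'n pt \<Rightarrow> ('x \<Rightarrow> 'k::field) \<Rightarrow> ('y \<Rightarrow> 'k)" assumes "pmor (flat_sum b X) B f" "finite I" "\<And>i. i \<in> I \<Longrightarrow> g i \<in> sp (flat_sum b X) z"
  shows "f z (sum g I) = (\<Sum>i\<in>I. f z (g i) :: _ \<Rightarrow> 'k::field)"
  using assms(2,3)
proof (induction I rule: finite_induct)
  case empty then show ?case by (simp only: sum.empty pmor_flat_zero[OF assms(1)])
next
  case (insert a I)
  have ih: "f z (sum g I) = (\<Sum>i\<in>I. f z (g i))" using insert by blast
  have "f z (sum g (insert a I)) = f z (g a + sum g I)" by (simp only: sum.insert[OF insert.hyps(1,2)])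
  also have "\<dots> = f z (g a) + f z (sum g I)"
    using insert by (intro pmor_add[OF assms(1)] flat_sum_mem) auto
  also have "\<dots> = (\<Sum>i\<in>insert a I. f z (g i))" by (simp only: sum.insert[OF insert.hyps(1,2)] ih)
  finally show ?case .
qed

lemma pmor_comp: fixes f :: "'n pt \<Rightarrow> ('x \<Rightarrow> 'k::field) \<Rightarrow> ('y \<Rightarrow> 'k)" and g :: "'n pt \<Rightarrow> ('y \<Rightarrow> 'k) \<Rightarrow> ('w \<Rightarrow> 'k)" assumes f: "pmor A B f" and g: "pmor B C g" shows "pmor A C (\<lambda>z x. g z (f z x))"
  unfolding pmor_def pm_linear_def
proof (intro conjI allI impI ballI)
  fix z u assume "u \<in> sp A z" then show "g z (f z u) \<in> sp C z" using f g by (meson pmor_mem)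
next
  fix z u v assume "u \<in> sp A z" "v \<in> sp A z"
  then have "f z (u + v) = f z u + f z v" "g z (f z u + f z v) = g z (f z u) + g z (f z v)"
    using pmor_add[OF f] pmor_add[OF g] pmor_mem[OF f] by auto
  then show "g z (f z (vadd u v)) = vadd (g z (f z u)) (g z (f z v))"
    unfolding vadd_eq by simp
next
  fix z c u assume "u \<in> sp A z"
  then show "g z (f z (vsmul c u)) = vsmul c (g z (f z u))"
    using f g unfolding vsmul_def by (simp add: pmor_smul pmor_mem)
next
  fix u w x assume "u \<le> w" "x \<in> sp A u"
  then show "g w (f w (mp A u w x)) = mp C u w (g u (f u x))"
    using f g by (simp add: pmor_nat pmor_mem)
qed


lemma sum_fun_app: "(\<Sum>i\<in>I. f i) x = (\<Sum>i\<in>I. f i x :: 'a::comm_monoid_add)"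
  by (induction I rule: infinite_finite_induct) auto

lemma pmor_flat_const:
  fixes f :: "'n pt \<Rightarrow> ('x \<Rightarrow> 'k::field) \<Rightarrow> ('y \<Rightarrow> 'k)"
  assumes mem: "\<And>z v. v \<in> sp (flat_sum b X) z \<Longrightarrow> f z v \<in> sp (flat_sum b' X') z"
    and add: "\<And>z u v. f z (u + v) = f z u + f z v"
    and smul: "\<And>z c u. f z (\<lambda>t. c * u t) = (\<lambda>t. c * f z u t)"
    and const: "\<And>u w x. f w x = f u x"
  shows "pmor (flat_sum b X) (flat_sum b' X') f"
  unfolding pmor_def pm_linear_def vadd_eq vsmul_def flat_mp
proof (intro conjI allI impI ballI)
  fix u w and x :: "'x \<Rightarrow> 'k" assume "u \<le> w" "x \<in> sp (flat_sum b X) u"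
  show "f w x = f u x" by (rule const)
qed (auto intro: mem add smul)

locale cx =
  fixes gens :: "nat \<Rightarrow> ('n::{finite,linorder} \<Rightarrow> int) list"
    and d :: "nat \<Rightarrow> ('n \<Rightarrow> int) \<Rightarrow> (nat \<Rightarrow> 'k::field) \<Rightarrow> (nat \<Rightarrow> 'k)"
    and aug :: "('n \<Rightarrow> int) \<Rightarrow> (nat \<Rightarrow> 'k) \<Rightarrow> ('b \<Rightarrow> 'k)"
    and s :: "nat \<Rightarrow> nat \<Rightarrow> ('n \<Rightarrow> int) \<Rightarrow> ('n set \<times> nat \<Rightarrow> 'k) \<Rightarrow> ('n set \<times> nat \<Rightarrow> 'k)"
    and M :: "('n, 'b, 'k) pmod"
  assumes res: "free_resolution M CARD('n) gens d aug"
    and cc: "\<forall>i<CARD('n). chain_contraction gens d s i"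
begin

abbreviation SS :: "nat \<Rightarrow> nat \<Rightarrow> 'n pt \<Rightarrow> ('n set \<times> nat \<Rightarrow> 'k) set" where
  "SS i j z \<equiv> sp (OmegaF gens i j) z"
abbreviation FF :: "nat \<Rightarrow> 'n pt \<Rightarrow> (nat \<Rightarrow> 'k) set" where
  "FF j z \<equiv> sp (freeF gens j) z"

lemma N_pos: "0 < CARD('n)" by simp

lemma R1: "pmor (freeF gens 0) M aug"
  by (rule res[unfolded free_resolution_def, THEN conjunct1])
lemma R2: "\<forall>z. aug z ` sp (freeF gens 0) z = sp M z"
  by (rule res[unfolded free_resolution_def, THEN conjunct2, THEN conjunct1])
lemma R3: "\<forall>j. 1 \<le> j \<and> j \<le> CARD('n) \<longrightarrow> pmor (freeF gens j) (freeF gens (j - 1)) (d j)"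
  by (rule res[unfolded free_resolution_def, THEN conjunct2, THEN conjunct2, THEN conjunct1])
lemma R4: "\<forall>z. {x \<in> sp (freeF gens 0) z. aug z x = vzero} = d 1 z ` sp (freeF gens 1) z"
  by (rule res[unfolded free_resolution_def, THEN conjunct2, THEN conjunct2, THEN conjunct2, THEN conjunct1])
lemma R5: "\<forall>j z. 1 \<le> j \<and> j < CARD('n) \<longrightarrow>
        {x \<in> sp (freeF gens j) z. d j z x = vzero} = d (Suc j) z ` sp (freeF gens (Suc j)) z"
  by (rule res[unfolded free_resolution_def, THEN conjunct2, THEN conjunct2, THEN conjunct2, THEN conjunct2, THEN conjunct1])

lemma aug_pmor: "pmor (freeF gens 0) M aug" by (rule R1)
lemma d_pmor: "1 \<le> j \<Longrightarrow> j \<le> CARD('n) \<Longrightarrow> pmor (freeF gens j) (freeF gens (j-1)) (d j)"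
  using R3 by blast
lemma exact0: "x \<in> FF 0 z \<Longrightarrow> aug z x = 0 \<longleftrightarrow> x \<in> d 1 z ` FF 1 z"
proof -
  assume x: "x \<in> FF 0 z"
  have "x \<in> {x \<in> sp (freeF gens 0) z. aug z x = vzero} \<longleftrightarrow> x \<in> d 1 z ` FF 1 z" using R4 by simp
  then show ?thesis using x unfolding vzero_eq by simp
qed
lemma exactj: "1 \<le> j \<Longrightarrow> j < CARD('n) \<Longrightarrow> x \<in> FF j z \<Longrightarrow> d j z x = 0 \<longleftrightarrow> x \<in> d (Suc j) z ` FF (Suc j) z"
proof -
  assume j: "1 \<le> j" "j < CARD('n)" and x: "x \<in> FF j z"
  have "{x \<in> sp (freeF gens j) z. d j z x = vzero} = d (Suc j) z ` sp (freeF gens (Suc j)) z" using R5 j by blast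
  then have "x \<in> {x \<in> sp (freeF gens j) z. d j z x = vzero} \<longleftrightarrow> x \<in> d (Suc j) z ` FF (Suc j) z" by simp
  then show ?thesis using x unfolding vzero_eq by simp
qed

definition ee :: "nat \<Rightarrow> nat \<Rightarrow> 'k" where "ee l = (\<lambda>t. if t = l then 1 else 0)"

lemma ee_mem: "l < length (gens j) \<Longrightarrow> gens j ! l \<le> z \<Longrightarrow> ee l \<in> FF j z"
  unfolding sp_freeF ee_def by auto

lemma dmat_ee: "dmat gens d j m l = d j (gens j ! l) (ee l) m"
  unfolding dmat_def ee_def ..

lemma dF: assumes j: "1 \<le> j" "j \<le> CARD('n)" and y: "y \<in> FF j z"
  shows "d j z y = (\<lambda>m. \<Sum>l<length (gens j). dmat gens d j m l * y l)"
proof -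
  define L where "L = {l. l < length (gens j) \<and> gens j ! l \<le> z}"
  have finL: "finite L" unfolding L_def by auto
  have yz: "y t \<noteq> 0 \<Longrightarrow> t \<in> L" for t using y unfolding sp_freeF L_def by auto
  have ye: "y = (\<Sum>l\<in>L. (\<lambda>t. y l * ee l t))"
  proof (rule ext)
    fix t
    have "(\<Sum>l\<in>L. (\<lambda>t. y l * ee l t)) t = (\<Sum>l\<in>L. y l * ee l t)" by (rule sum_fun_app)
    also have "\<dots> = (\<Sum>l\<in>L. if t = l then y l else 0)" unfolding ee_def by (intro sum.cong) auto
    also have "\<dots> = (if t \<in> L then y t else 0)" using finL by simp
    also have "\<dots> = y t" using yz by auto
    finally show "y t = (\<Sum>l\<in>L. (\<lambda>t. y l * ee l t)) t" by simp
  qed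
  have dp: "pmor (flat_sum (\<lambda>l p. Some ((gens j ! l) p)) {..<length (gens j)}) (freeF gens (j-1)) (d j)"
    using d_pmor[OF j] unfolding freeF_def .
  have memL: "l \<in> L \<Longrightarrow> ee l \<in> sp (flat_sum (\<lambda>l p. Some ((gens j ! l) p)) {..<length (gens j)}) z" for l
    using ee_mem unfolding L_def freeF_def by auto
  have "d j z y = (\<Sum>l\<in>L. d j z (\<lambda>t. y l * ee l t))"
    by (subst ye, rule pmor_flat_sum[OF dp finL]) (rule flat_smul[OF memL])
  also have "\<dots> = (\<Sum>l\<in>L. (\<lambda>t. y l * d j z (ee l) t))"
    by (intro sum.cong refl pmor_smul[OF dp memL])
  also have "\<dots> = (\<Sum>l\<in>L. (\<lambda>t. y l * d j (gens j ! l) (ee l) t))"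
  proof (intro sum.cong refl)
    fix l assume l: "l \<in> L"
    then have le: "gens j ! l \<le> z" and ll: "l < length (gens j)" unfolding L_def by auto
    have "ee l \<in> FF j (gens j ! l)" using ee_mem[OF ll] by simp
    then have "d j z (mp (freeF gens j) (gens j ! l) z (ee l)) = mp (freeF gens (j-1)) (gens j ! l) z (d j (gens j ! l) (ee l))"
      by (rule pmor_nat[OF d_pmor[OF j] le])
    then have "d j z (ee l) = d j (gens j ! l) (ee l)" unfolding freeF_def flat_mp .
    then show "(\<lambda>t. y l * d j z (ee l) t) = (\<lambda>t. y l * d j (gens j ! l) (ee l) t)" by simp
  qed
  finally have e1: "d j z y = (\<Sum>l\<in>L. (\<lambda>t. y l * d j (gens j ! l) (ee l) t))" .
  show ?thesis
  proof (rule ext)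
    fix m
    have "d j z y m = (\<Sum>l\<in>L. y l * d j (gens j ! l) (ee l) m)" unfolding e1 by (rule sum_fun_app)
    also have "\<dots> = (\<Sum>l\<in>L. dmat gens d j m l * y l)" unfolding dmat_ee by (simp add: mult.commute)
    also have "\<dots> = (\<Sum>l<length (gens j). dmat gens d j m l * y l)"
      by (rule sum.mono_neutral_left) (auto simp: L_def dest: yz)
    finally show "d j z y m = (\<Sum>l<length (gens j). dmat gens d j m l * y l)" .
  qed
qed

end

context cx begin

lemma dmat_supp: assumes j: "1 \<le> j" "j \<le> CARD('n)" and l: "l < length (gens j)"
    and nz: "dmat gens d j m l \<noteq> 0"
  shows "m < length (gens (j-1)) \<and> gens (j-1) ! m \<le> gens j ! l"
proof -
  have "ee l \<in> FF j (gens j ! l)" using ee_mem[OF l] by simp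
  then have "d j (gens j ! l) (ee l) \<in> FF (j-1) (gens j ! l)" by (rule pmor_mem[OF d_pmor[OF j]])
  then show ?thesis using nz unfolding dmat_ee sp_freeF by blast
qed

lemma dd0: assumes j: "2 \<le> j" "j \<le> CARD('n)" and l': "l' < length (gens j)"
  shows "(\<Sum>l<length (gens (j-1)). dmat gens d (j-1) m l * dmat gens d j l l') = 0"
proof -
  let ?g = "gens j ! l'"
  have j1: "1 \<le> j" "j \<le> CARD('n)" "1 \<le> j - 1" "j - 1 \<le> CARD('n)" "j - 1 < CARD('n)" using j by auto
  have em: "ee l' \<in> FF j ?g" using ee_mem[OF l'] by simp
  define col where "col = d j ?g (ee l')"
  have cm: "col \<in> FF (j-1) ?g" unfolding col_def by (rule pmor_mem[OF d_pmor[OF j1(1,2)] em])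
  have sj: "Suc (j-1) = j" using j by auto
  have "col \<in> d (Suc (j-1)) ?g ` FF (Suc (j-1)) ?g" unfolding sj col_def using em by blast
  then have z: "d (j-1) ?g col = 0" using exactj[OF j1(3,5) cm] by blast
  have "d (j-1) ?g col = (\<lambda>m. \<Sum>l<length (gens (j-1)). dmat gens d (j-1) m l * col l)"
    by (rule dF[OF j1(3,4) cm])
  then have "(\<Sum>l<length (gens (j-1)). dmat gens d (j-1) m l * col l) = 0" using z by (metis zero_fun_apply)
  moreover have "col l = dmat gens d j l l'" for l unfolding col_def dmat_ee ..
  ultimately show ?thesis by simp
qed

lemma dOmega_sp: assumes j: "1 \<le> j" "j \<le> CARD('n)" and v: "v \<in> SS i j z"
  shows "dOmega gens d i j z v \<in> SS i (j-1) z"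
  unfolding sp_OmegaF
proof (intro allI impI)
  fix Q m assume nz: "dOmega gens d i j z v (Q, m) \<noteq> 0"
  then have c: "card Q = CARD('n) - i" "m < length (gens (j-1))"
    and sn: "(\<Sum>l<length (gens j). dmat gens d j m l * v (Q, l)) \<noteq> 0"
    unfolding dOmega_def by (auto split: if_splits)
  then obtain l where l: "l < length (gens j)" "dmat gens d j m l * v (Q, l) \<noteq> 0"
    by (meson sum.not_neutral_contains_not_neutral lessThan_iff)
  then have dn: "dmat gens d j m l \<noteq> 0" and vn: "v (Q,l) \<noteq> 0" by auto
  have le: "gens (j-1) ! m \<le> gens j ! l" using dmat_supp[OF j l(1) dn] by blast
  have "\<forall>p. p \<notin> Q \<longrightarrow> (gens j ! l) p \<le> z p" using v vn unfolding sp_OmegaF by blast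
  then have "\<forall>p. p \<notin> Q \<longrightarrow> (gens (j-1) ! m) p \<le> z p" using le unfolding le_fun_def by (meson order_trans)
  then show "card Q = CARD('n) - i \<and> m < length (gens (j - 1)) \<and> (\<forall>p. p \<notin> Q \<longrightarrow> (gens (j - 1) ! m) p \<le> z p)"
    using c by blast
qed

lemma dOmega_dd: assumes j: "2 \<le> j" "j \<le> CARD('n)"
  shows "dOmega gens d i (j-1) z (dOmega gens d i j z v) = 0"
proof (rule ext, clarify)
  fix Q m
  show "dOmega gens d i (j-1) z (dOmega gens d i j z v) (Q, m) = 0 (Q,m)"
  proof (cases "card Q = CARD('n) - i \<and> m < length (gens (j - 1 - 1))")
    case True
    have "dOmega gens d i (j-1) z (dOmega gens d i j z v) (Q, m)
        = (\<Sum>l<length (gens (j-1)). dmat gens d (j-1) m l * (\<Sum>l'<length (gens j). dmat gens d j l l' * v (Q, l')))"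
      using True unfolding dOmega_def by (auto intro!: sum.cong)
    also have "\<dots> = (\<Sum>l'<length (gens j). (\<Sum>l<length (gens (j-1)). dmat gens d (j-1) m l * dmat gens d j l l') * v (Q, l'))"
      by (simp add: sum_distrib_left sum_distrib_right mult.assoc) (rule sum.swap)
    also have "\<dots> = 0" using dd0[OF j] by simp
    finally show ?thesis by simp
  next
    case False
    then show ?thesis unfolding dOmega_def by auto
  qed
qed

lemma dOmega_diff: "dOmega gens d i j z (v - w) = dOmega gens d i j z v - dOmega gens d i j z w"
  unfolding dOmega_def by (auto simp: fun_eq_iff right_diff_distrib sum_subtractf)

lemma dOmega_zero: "dOmega gens d i j z 0 = 0"
  using dOmega_diff[of i j z 0 0] by simp

lemma card_remove: "q \<in> (Q :: 'n set) \<Longrightarrow> card (Q - {q}) = card Q - 1 \<and> card Q \<ge> 1"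
  by (simp add: card_gt_0_iff Suc_le_eq) (meson card_gt_0_iff empty_iff finite)

lemma dK: assumes i: "1 \<le> i" "i \<le> CARD('n)"
  shows "dOmega gens d (i-1) j z (Kc v) = Kc (dOmega gens d i j z v)"
proof (rule ext, clarify)
  fix Q m
  show "dOmega gens d (i-1) j z (Kc v) (Q, m) = Kc (dOmega gens d i j z v) (Q, m)"
  proof (cases "card Q = CARD('n) - i + 1 \<and> m < length (gens (j - 1))")
    case True
    have cq: "q \<in> Q \<Longrightarrow> card (Q - {q}) = CARD('n) - i" for q using card_remove[of q Q] True by simp
    have "dOmega gens d (i-1) j z (Kc v) (Q, m) = (\<Sum>l<length (gens j). dmat gens d j m l * (\<Sum>q\<in>Q. cech_sign (Q - {q}) q * v (Q - {q}, l)))"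
      using True i unfolding dOmega_def Kc_def by auto
    also have "\<dots> = (\<Sum>q\<in>Q. cech_sign (Q - {q}) q * (\<Sum>l<length (gens j). dmat gens d j m l * v (Q - {q}, l)))"
      by (simp add: sum_distrib_left mult.left_commute sum.swap[of _ Q])
    also have "\<dots> = Kc (dOmega gens d i j z v) (Q, m)"
      unfolding Kc_def dOmega_def using True cq by (auto intro!: sum.cong)
    finally show ?thesis .
  next
    case False
    have l: "dOmega gens d (i-1) j z (Kc v) (Q, m) = 0" using False i unfolding dOmega_def by auto
    have "Kc (dOmega gens d i j z v) (Q, m) = (\<Sum>q\<in>Q. cech_sign (Q-{q}) q * dOmega gens d i j z v (Q - {q}, m))"
      by (simp add: Kc_def)
    also have "\<dots> = 0"
    proof (rule sum.neutral, rule ballI)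
      fix q assume q: "q \<in> Q"
      have "card (Q - {q}) = card Q - 1" "card Q \<ge> 1" using card_remove[OF q] by auto
      then have "dOmega gens d i j z v (Q - {q}, m) = 0" unfolding dOmega_def using False by auto
      then show "cech_sign (Q-{q}) q * dOmega gens d i j z v (Q - {q}, m) = 0" by simp
    qed
    finally have "Kc (dOmega gens d i j z v) (Q, m) = 0" .
    then show ?thesis using l by simp
  qed
qed

lemma kappa_K: assumes v: "v \<in> SS i j z" shows "kappaF gens i j z v = Kc v"
proof (rule ext, clarify)
  fix Q l
  show "kappaF gens i j z v (Q, l) = Kc v (Q, l)"
  proof (cases "card Q = CARD('n) - i + 1 \<and> l < length (gens j)")
    case True then show ?thesis unfolding kappaF_def Kc_def by simp
  next
    case False
    have "Kc v (Q,l) = (\<Sum>q\<in>Q. cech_sign (Q - {q}) q * v (Q - {q}, l))" by (simp add: Kc_def)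
    also have "\<dots> = 0"
    proof (rule sum.neutral, rule ballI)
      fix q assume q: "q \<in> Q"
      show "cech_sign (Q - {q}) q * v (Q - {q}, l) = 0"
      proof (rule ccontr)
        assume "cech_sign (Q - {q}) q * v (Q - {q}, l) \<noteq> 0"
        then have "v (Q - {q}, l) \<noteq> 0" by auto
        then have "card (Q - {q}) = CARD('n) - i" "l < length (gens j)" using v unfolding sp_OmegaF by auto
        then show False using False card_remove[OF q] by auto
      qed
    qed
    finally have "Kc v (Q,l) = 0" .
    moreover have "kappaF gens i j z v (Q,l) = 0" using False unfolding kappaF_def by auto
    ultimately show ?thesis by simp
  qed
qed

lemma K_sp: assumes i: "1 \<le> i" "i \<le> CARD('n)" and v: "v \<in> SS i j z" shows "Kc v \<in> SS (i-1) j z"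
  unfolding sp_OmegaF
proof (intro allI impI)
  fix Q l assume nz: "Kc v (Q, l) \<noteq> 0"
  then have "(\<Sum>q\<in>Q. cech_sign (Q-{q}) q * v (Q-{q},l)) \<noteq> 0" by (simp add: Kc_def)
  then obtain q where q: "q \<in> Q" "cech_sign (Q - {q}) q * v (Q - {q}, l) \<noteq> 0"
    by (meson sum.not_neutral_contains_not_neutral)
  then have "v (Q - {q}, l) \<noteq> 0" by auto
  then have c: "card (Q - {q}) = CARD('n) - i" "l < length (gens j)" "\<forall>p. p \<notin> Q - {q} \<longrightarrow> (gens j ! l) p \<le> z p"
    using v unfolding sp_OmegaF by auto
  have "card Q = CARD('n) - (i-1)" using c(1) card_remove[OF q(1)] i by auto
  then show "card Q = CARD('n) - (i - 1) \<and> l < length (gens j) \<and> (\<forall>p. p \<notin> Q \<longrightarrow> (gens j ! l) p \<le> z p)"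
    using c by auto
qed

lemma Kc_add: "Kc (v + w) = Kc v + Kc w"
  unfolding Kc_def by (rule ext, clarify) (simp add: distrib_left sum.distrib)
lemma Kc_diff: "Kc (v - w) = Kc v - Kc w"
  unfolding Kc_def by (rule ext, clarify) (simp add: right_diff_distrib sum_subtractf)
lemma Kc_zero: "Kc 0 = 0"
  unfolding Kc_def by (rule ext, clarify) simp

end

context cx begin

definition cz :: "nat \<Rightarrow> 'n pt \<Rightarrow> nat \<Rightarrow> 'n option" where
  "cz j z l = (if \<exists>p. (gens j ! l) p \<le> z p then Some (SOME p. (gens j ! l) p \<le> z p) else None)"

lemma cz_Some: "cz j z l = Some q \<Longrightarrow> (gens j ! l) q \<le> z q"
  unfolding cz_def by (auto split: if_splits intro: someI_ex)

lemma cz_None: "cz j z l = None \<Longrightarrow> z p < (gens j ! l) p"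
  unfolding cz_def by (auto split: if_splits simp: not_le)

lemma none_zero: assumes "cz j z l = None" "v \<in> SS i j z" "v (Q,l) \<noteq> 0"
  shows "Q = UNIV \<and> i = 0"
proof -
  have "\<forall>p. p \<notin> Q \<longrightarrow> (gens j ! l) p \<le> z p" using assms(2,3) unfolding sp_OmegaF by blast
  then have Q: "Q = UNIV" using cz_None[OF assms(1)] by (metis UNIV_eq_I not_le)
  have "card Q = CARD('n) - i" using assms(2,3) unfolding sp_OmegaF by blast
  then have "CARD('n) = CARD('n) - i" using Q by simp
  then have "i = 0" using N_pos by linarith
  then show ?thesis using Q by simp
qed

lemma H_sp: assumes i: "i < CARD('n)" and v: "v \<in> SS i j z" shows "Hc (cz j z) v \<in> SS (Suc i) j z"
  unfolding sp_OmegaF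
proof (intro allI impI)
  fix Q l assume nz: "Hc (cz j z) v (Q, l) \<noteq> 0"
  then obtain q0 where c: "cz j z l = Some q0" unfolding Hc_def by (cases "cz j z l") auto
  then have q0: "q0 \<notin> Q" "v (insert q0 Q, l) \<noteq> 0" using nz unfolding Hc_def by (auto split: if_splits)
  then have h: "card (insert q0 Q) = CARD('n) - i" "l < length (gens j)"
    "\<forall>p. p \<notin> insert q0 Q \<longrightarrow> (gens j ! l) p \<le> z p"
    using v unfolding sp_OmegaF by blast+
  have "card (insert q0 Q) = Suc (card Q)" using q0(1) by simp
  then have "card Q = CARD('n) - Suc i" using h(1) by simp
  moreover have "\<forall>p. p \<notin> Q \<longrightarrow> (gens j ! l) p \<le> z p" using h(3) cz_Some[OF c] by auto
  ultimately show "card Q = CARD('n) - Suc i \<and> l < length (gens j) \<and> (\<forall>p. p \<notin> Q \<longrightarrow> (gens j ! l) p \<le> z p)"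
    using h(2) by blast
qed

lemma H_top: assumes v: "v \<in> SS CARD('n) j z" shows "Hc (cz j z) v = 0"
proof (rule ext, clarify)
  fix Q l
  show "Hc (cz j z) v (Q,l) = 0 (Q,l)"
  proof (rule ccontr)
    assume nz: "Hc (cz j z) v (Q,l) \<noteq> 0 (Q,l)"
    then obtain q0 where c: "cz j z l = Some q0" unfolding Hc_def by (cases "cz j z l") auto
    then have q0: "q0 \<notin> Q" "v (insert q0 Q, l) \<noteq> 0" using nz unfolding Hc_def by (auto split: if_splits)
    then have "card (insert q0 Q) = CARD('n) - CARD('n)" using v unfolding sp_OmegaF by blast
    then show False by simp
  qed
qed

lemma Hc_zero: "Hc c 0 = 0"
  unfolding Hc_def by (rule ext, clarify) (simp split: option.splits)

lemma KH_id: assumes v: "v \<in> SS i j z" and nz: "\<And>l Q. cz j z l = None \<Longrightarrow> v (Q,l) = 0"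
  shows "Kc (Hc (cz j z) v) + Hc (cz j z) (Kc v) = v"
proof (rule ext, clarify)
  fix Q l
  show "(Kc (Hc (cz j z) v) + Hc (cz j z) (Kc v)) (Q,l) = v (Q,l)"
  proof (cases "cz j z l")
    case None
    have a: "Hc (cz j z) w (Q', l) = 0" for w Q' unfolding Hc_def using None by simp
    have "Kc (Hc (cz j z) v) (Q,l) = 0" unfolding Kc_def by (simp add: a)
    then show ?thesis using a nz[OF None] by simp
  next
    case (Some q0)
    show ?thesis using KH[of "cz j z" l q0 v Q, OF Some] by simp
  qed
qed

lemma col_exact: assumes i: "1 \<le> i" "i \<le> CARD('n)" and v: "v \<in> SS i j z" and k: "Kc v = 0"
  shows "v = Kc (Hc (cz j z) v)"
proof -
  have "Kc (Hc (cz j z) v) + Hc (cz j z) (Kc v) = v"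
    using KH_id[OF v] none_zero[OF _ v] i by fastforce
  then show ?thesis using k by (simp add: Hc_zero)
qed

lemma col_top: assumes v: "v \<in> SS CARD('n) j z" and k: "Kc v = 0" shows "v = 0"
  using col_exact[OF _ _ v k] H_top[OF v] Kc_zero N_pos by simp

lemma card_le_N: "card (Q :: 'n set) \<le> CARD('n)" by (rule card_mono) auto

lemma eps_iff: "upper_ge (\<lambda>p. Some ((gens CARD('n) ! l) p - 1)) z \<longleftrightarrow> (\<forall>p. z p < (gens CARD('n) ! l) p)"
  unfolding upper_ge_def by auto

lemma col_exact0: assumes v: "v \<in> SS 0 CARD('n) z" and e: "epsF gens z v = 0"
  shows "v = Kc (Hc (cz CARD('n) z) v)"
proof -
  have k: "Kc v = 0"
  proof (rule ext, clarify)
    fix Q l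
    have "(\<Sum>q\<in>Q. cech_sign (Q - {q}) q * v (Q - {q}, l)) = 0"
    proof (rule sum.neutral, rule ballI)
      fix q assume q: "q \<in> Q"
      have "v (Q - {q}, l) = 0"
      proof (rule ccontr)
        assume "v (Q - {q}, l) \<noteq> 0"
        then have "card (Q - {q}) = CARD('n)" using v unfolding sp_OmegaF by auto
        then show False using card_remove[OF q] card_le_N[of Q] by auto
      qed
      then show "cech_sign (Q - {q}) q * v (Q - {q}, l) = 0" by simp
    qed
    then show "Kc v (Q,l) = 0 (Q,l)" by (simp add: Kc_def)
  qed
  have nz: "v (Q,l) = 0" if c: "cz CARD('n) z l = None" for Q l
  proof (rule ccontr)
    assume n: "v (Q,l) \<noteq> 0"
    then have Q: "Q = UNIV" using none_zero[OF c v] by blast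
    have ll: "l < length (gens CARD('n))" using v n unfolding sp_OmegaF by blast
    have "epsF gens z v l = v (UNIV, l)" unfolding epsF_def eps_iff using ll cz_None[OF c] by simp
    then show False using e n Q by simp
  qed
  have "Kc (Hc (cz CARD('n) z) v) + Hc (cz CARD('n) z) (Kc v) = v" using KH_id[OF v] nz by blast
  then show ?thesis using k by (simp add: Hc_zero)
qed

lemma epsK: assumes w: "w \<in> SS 1 CARD('n) z" shows "epsF gens z (Kc w) = 0"
proof (rule ext)
  fix l
  show "epsF gens z (Kc w) l = 0 l"
  proof (cases "l < length (gens CARD('n)) \<and> (\<forall>p. z p < (gens CARD('n) ! l) p)")
    case True
    have "(\<Sum>q\<in>UNIV. cech_sign (UNIV - {q}) q * w (UNIV - {q}, l)) = 0"
    proof (rule sum.neutral, rule ballI)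
      fix q :: 'n
      have "w (UNIV - {q}, l) = 0"
      proof (rule ccontr)
        assume "w (UNIV - {q}, l) \<noteq> 0"
        then have "(gens CARD('n) ! l) q \<le> z q" using w unfolding sp_OmegaF by auto
        then show False using True by (meson not_less)
      qed
      then show "cech_sign (UNIV - {q}) q * w (UNIV - {q}, l) = 0" by simp
    qed
    then show ?thesis unfolding epsF_def eps_iff Kc_def using True by simp
  next
    case False
    then show ?thesis unfolding epsF_def eps_iff by auto
  qed
qed

end

lemma pmor_const:
  fixes f :: "'n pt \<Rightarrow> ('x \<Rightarrow> 'k::field) \<Rightarrow> ('y \<Rightarrow> 'k)"
  assumes mpA: "\<And>u w x. mp A u w x = x" and mpB: "\<And>u w x. mp B u w x = x"
    and mem: "\<And>z v. v \<in> sp A z \<Longrightarrow> f z v \<in> sp B z"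
    and add: "\<And>z u v. f z (u + v) = f z u + f z v"
    and smul: "\<And>z c u. f z (\<lambda>t. c * u t) = (\<lambda>t. c * f z u t)"
    and const: "\<And>u w x. f w x = f u x"
  shows "pmor A B f"
  unfolding pmor_def pm_linear_def vadd_eq vsmul_def mpA mpB
proof (intro conjI allI impI ballI)
  fix u w and x :: "'x \<Rightarrow> 'k" assume "u \<le> w" "x \<in> sp A u"
  show "f w x = f u x" by (rule const)
qed (auto intro: mem add smul)

context cx begin

lemma mpO: "mp (OmegaF gens i j) u w x = x" by (simp add: OmegaF_def flat_mp)
lemma mpF: "mp (freeF gens j) u w y = y" by (simp add: freeF_def flat_mp)

lemma CC: "i < CARD('n) \<Longrightarrow> chain_contraction gens d s i" using cc by blast

lemma s_pmor: "i < CARD('n) \<Longrightarrow> j < CARD('n) \<Longrightarrow> pmor (OmegaF gens i j) (OmegaF gens i (Suc j)) (s i j)"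
  using CC[unfolded chain_contraction_def, THEN conjunct1] by blast

lemma s_homot: assumes "i < CARD('n)" "j \<le> CARD('n)" "x \<in> SS i j z"
  shows "x = (if j < CARD('n) then dOmega gens d i (Suc j) z (s i j z x) else 0)
           + (if 0 < j then s i (j - 1) z (dOmega gens d i j z x) else 0)"
proof -
  have "\<forall>j\<le>CARD('n). \<forall>z. \<forall>x\<in>sp (OmegaF gens i j) z.
        x = vadd (if j < CARD('n) then dOmega gens d i (Suc j) z (s i j z x) else vzero)
                 (if 0 < j then s i (j - 1) z (dOmega gens d i j z x) else vzero)"
    using CC[OF assms(1), unfolded chain_contraction_def, THEN conjunct2] .
  then show ?thesis using assms(2,3) unfolding vadd_eq vzero_eq by blast
qed

lemma s_mem: "i < CARD('n) \<Longrightarrow> j < CARD('n) \<Longrightarrow> x \<in> SS i j z \<Longrightarrow> s i j z x \<in> SS i (Suc j) z"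
  using pmor_mem[OF s_pmor] by blast

lemma s_zero: "i < CARD('n) \<Longrightarrow> j < CARD('n) \<Longrightarrow> s i j z 0 = 0"
  using pmor_flat_zero[OF s_pmor[unfolded OmegaF_def]] by blast

lemma O_zero: "0 \<in> SS i j z" unfolding OmegaF_def by (rule flat_zero)
lemma O_diff: "v \<in> SS i j z \<Longrightarrow> w \<in> SS i j z \<Longrightarrow> v - w \<in> SS i j z" unfolding OmegaF_def by (rule flat_diff)

lemma iota_mem: "y \<in> FF j z \<Longrightarrow> iotaF z y \<in> SS CARD('n) j z"
  unfolding sp_OmegaF sp_freeF iotaF_def le_fun_def by (auto split: if_splits)

lemma iota_pmor: "pmor (freeF gens 0 :: ('n, nat, 'k) pmod) (OmegaF gens CARD('n) 0) iotaF"
  by (rule pmor_const[OF mpF mpO iota_mem]) (auto simp: iotaF_def fun_eq_iff)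

lemma kappa_pmor: assumes i: "1 \<le> i" "i \<le> CARD('n)"
  shows "pmor (OmegaF gens i j) (OmegaF gens (i-1) j) (kappaF gens i j :: _ \<Rightarrow> _ \<Rightarrow> _ \<Rightarrow> 'k)"
proof (rule pmor_const[OF mpO mpO])
  fix z v assume "v \<in> SS i j z" then show "kappaF gens i j z v \<in> SS (i-1) j z"
    using kappa_K K_sp[OF i] by simp
next
  fix z u v show "kappaF gens i j z (u + v) = kappaF gens i j z u + kappaF gens i j z v"
    unfolding kappaF_def by (rule ext, clarify) (simp add: distrib_left sum.distrib)
next
  fix z c u show "kappaF gens i j z (\<lambda>t. c * u t) = (\<lambda>t. c * kappaF gens i j z u t)"
    unfolding kappaF_def by (rule ext, clarify) (simp add: sum_distrib_left mult.left_commute)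
next
  fix u w x show "kappaF gens i j w x = kappaF gens i j u x" unfolding kappaF_def ..
qed

lemma tcomp_pmor: "m \<le> CARD('n) \<Longrightarrow> pmor (OmegaF gens CARD('n) 0) (OmegaF gens (CARD('n) - m) m) (tcomp gens s m)"
proof (induction m)
  case 0
  show ?case by (simp, rule pmor_const[OF mpO mpO]) auto
next
  case (Suc m)
  then have m: "m < CARD('n)" by simp
  have k: "pmor (OmegaF gens (CARD('n) - m) m) (OmegaF gens (CARD('n) - Suc m) m) (kappaF gens (CARD('n) - m) m :: _ \<Rightarrow> _ \<Rightarrow> _ \<Rightarrow> 'k)"
  proof -
    have a: "1 \<le> CARD('n) - m" "CARD('n) - m \<le> CARD('n)" using m by auto
    have b: "CARD('n) - m - 1 = CARD('n) - Suc m" by simp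
    show ?thesis using kappa_pmor[OF a, of m] unfolding b .
  qed
  have ss: "pmor (OmegaF gens (CARD('n) - Suc m) m) (OmegaF gens (CARD('n) - Suc m) (Suc m)) (s (CARD('n) - Suc m) m)"
    using s_pmor m by simp
  have "pmor (OmegaF gens CARD('n) 0) (OmegaF gens (CARD('n) - Suc m) (Suc m))
     (\<lambda>z x. s (CARD('n) - Suc m) m z (kappaF gens (CARD('n) - m) m z (tcomp gens s m z x)))"
    using pmor_comp[OF pmor_comp[OF Suc.IH[OF less_imp_le[OF m]] k] ss] by simp
  then show ?case by simp
qed

lemma eps_pmor: "pmor (OmegaF gens 0 CARD('n)) (nuF gens) (epsF gens :: _ \<Rightarrow> _ \<Rightarrow> _ \<Rightarrow> 'k)"
  unfolding pmor_def pm_linear_def vadd_eq vsmul_def mpO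
proof (intro conjI allI impI ballI)
  fix z and u :: "'n set \<times> nat \<Rightarrow> 'k"
  show "epsF gens z u \<in> sp (nuF gens) z" unfolding sp_nuF epsF_def eps_iff by auto
next
  fix z and u v :: "'n set \<times> nat \<Rightarrow> 'k"
  show "epsF gens z (u + v) = epsF gens z u + epsF gens z v" unfolding epsF_def by (auto simp: fun_eq_iff)
next
  fix z c and u :: "'n set \<times> nat \<Rightarrow> 'k"
  show "epsF gens z (\<lambda>x. c * u x) = (\<lambda>x. c * epsF gens z u x)" unfolding epsF_def by (auto simp: fun_eq_iff)
next
  fix u w :: "'n pt" and x :: "'n set \<times> nat \<Rightarrow> 'k" assume uw: "u \<le> w"
  show "epsF gens w x = mp (nuF gens) u w (epsF gens u x)"
  proof (rule ext)
    fix l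
    have "(\<forall>p. w p < (gens CARD('n) ! l) p) \<Longrightarrow> (\<forall>p. u p < (gens CARD('n) ! l) p)"
      using uw unfolding le_fun_def by (meson order_le_less_trans)
    then show "epsF gens w x l = mp (nuF gens) u w (epsF gens u x) l"
      unfolding epsF_def nuF_def inj_sum_def eps_iff by auto
  qed
qed

lemma phi_eq: "phiF gens s = (\<lambda>z x. epsF gens z (tcomp gens s CARD('n) z (iotaF z x)))"
  by (rule ext)+ (simp add: phiF_def)

lemma phi_pmor: "pmor (freeF gens 0) (nuF gens) (phiF gens s)"
proof -
  have t: "pmor (OmegaF gens CARD('n) 0) (OmegaF gens 0 CARD('n)) (tcomp gens s CARD('n))"
    using tcomp_pmor[of "CARD('n)"] by simp
  show ?thesis unfolding phi_eq using pmor_comp[OF pmor_comp[OF iota_pmor t] eps_pmor] by simp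
qed

lemma iota_d: assumes y: "y \<in> FF 1 z" shows "dOmega gens d CARD('n) 1 z (iotaF z y) = iotaF z (d 1 z y)"
proof (rule ext, clarify)
  fix Q m
  show "dOmega gens d CARD('n) 1 z (iotaF z y) (Q, m) = iotaF z (d 1 z y) (Q, m)"
  proof (cases "Q = {}")
    case True
    have dm: "d 1 z y \<in> FF 0 z" using pmor_mem[OF d_pmor y] N_pos by simp
    have de: "d 1 z y = (\<lambda>m. \<Sum>l<length (gens 1). dmat gens d 1 m l * y l)" using dF[OF _ _ y] N_pos by simp
    show ?thesis
    proof (cases "m < length (gens 0)")
      case True2: True
      show ?thesis unfolding dOmega_def iotaF_def using True True2 de by simp
    next
      case False
      then have "d 1 z y m = 0" using dm unfolding sp_freeF by auto
      then show ?thesis unfolding dOmega_def iotaF_def using True False by simp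
    qed
  next
    case False
    then have "card Q \<noteq> 0" by simp
    then show ?thesis unfolding dOmega_def iotaF_def using False by simp
  qed
qed

lemma iota_inv: assumes w: "w \<in> SS CARD('n) j z"
  shows "w = iotaF z (\<lambda>l. w ({},l)) \<and> (\<lambda>l. w ({},l)) \<in> FF j z"
proof
  show "w = iotaF z (\<lambda>l. w ({},l))"
  proof (rule ext, clarify)
    fix Q l
    show "w (Q,l) = iotaF z (\<lambda>l. w ({},l)) (Q,l)"
    proof (cases "w (Q,l) = 0")
      case False
      then have "card Q = 0" using w unfolding sp_OmegaF by auto
      then have "Q = {}" by simp
      then show ?thesis unfolding iotaF_def by simp
    qed (auto simp: iotaF_def)
  qed
  show "(\<lambda>l. w ({},l)) \<in> FF j z"
    using w unfolding sp_OmegaF sp_freeF le_fun_def by auto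
qed

lemma iota_inj: "iotaF z x = (iotaF z y :: _ \<Rightarrow> 'k) \<Longrightarrow> x = y"
proof (rule ext)
  fix l assume e: "iotaF z x = (iotaF z y :: _ \<Rightarrow> 'k)"
  have "iotaF z x ({},l) = iotaF z y ({},l)" using e by simp
  then show "x l = y l" by (simp add: iotaF_def)
qed

end

context cx begin

definition aa :: "'n pt \<Rightarrow> (nat \<Rightarrow> 'k) \<Rightarrow> nat \<Rightarrow> ('n set \<times> nat \<Rightarrow> 'k)" where
  "aa z x m = tcomp gens s m z (iotaF z x)"

lemma a_mem: assumes x: "x \<in> FF 0 z" and m: "m \<le> CARD('n)" shows "aa z x m \<in> SS (CARD('n) - m) m z"
  unfolding aa_def by (rule pmor_mem[OF tcomp_pmor[OF m] iota_mem[OF x]])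

lemma a_suc: assumes x: "x \<in> FF 0 z" and m: "m < CARD('n)"
  shows "aa z x (Suc m) = s (CARD('n) - Suc m) m z (Kc (aa z x m))"
proof -
  have "aa z x (Suc m) = s (CARD('n) - Suc m) m z (kappaF gens (CARD('n) - m) m z (aa z x m))"
    unfolding aa_def by simp
  also have "kappaF gens (CARD('n) - m) m z (aa z x m) = Kc (aa z x m)"
    using kappa_K a_mem[OF x] m by simp
  finally show ?thesis .
qed

lemma a_d: assumes x: "x \<in> FF 0 z"
  shows "Suc k \<le> CARD('n) \<Longrightarrow> dOmega gens d (CARD('n) - Suc k) (Suc k) z (aa z x (Suc k)) = Kc (aa z x k)"
proof (induction k)
  case 0
  have N: "0 < CARD('n)" by simp
  let ?i = "CARD('n) - Suc 0"
  let ?X = "Kc (aa z x 0)"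
  have i1: "1 \<le> CARD('n)" "CARD('n) \<le> CARD('n)" using N by auto
  have am: "aa z x 0 \<in> SS CARD('n) 0 z" using a_mem[OF x, of 0] by simp
  have Xm: "?X \<in> SS ?i 0 z" using K_sp[OF i1 am] by simp
  have "?X = dOmega gens d ?i (Suc 0) z (s ?i 0 z ?X)" using s_homot[OF _ _ Xm] N by simp
  then show ?case using a_suc[OF x N] by simp
next
  case (Suc k)
  let ?i = "CARD('n) - Suc (Suc k)"
  let ?X = "Kc (aa z x (Suc k))"
  have k: "Suc (Suc k) \<le> CARD('n)" by fact
  have i1: "1 \<le> CARD('n) - Suc k" "CARD('n) - Suc k \<le> CARD('n)" "CARD('n) - Suc k - 1 = ?i" using k by auto
  have am: "aa z x (Suc k) \<in> SS (CARD('n) - Suc k) (Suc k) z" using a_mem[OF x, of "Suc k"] k by simp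
  have Xm: "?X \<in> SS ?i (Suc k) z" using K_sp[OF i1(1,2) am] i1(3) by simp
  have "dOmega gens d ?i (Suc k) z ?X = Kc (dOmega gens d (CARD('n) - Suc k) (Suc k) z (aa z x (Suc k)))"
    using dK[OF i1(1,2)] i1(3) by simp
  also have "\<dots> = 0" using Suc.IH k KK by simp
  finally have z0: "dOmega gens d ?i (Suc k) z ?X = 0" .
  have "?X = dOmega gens d ?i (Suc (Suc k)) z (s ?i (Suc k) z ?X) + s ?i k z (dOmega gens d ?i (Suc k) z ?X)"
    using s_homot[OF _ _ Xm] k by simp
  then have "?X = dOmega gens d ?i (Suc (Suc k)) z (s ?i (Suc k) z ?X)"
    using z0 s_zero[of ?i k z] k by simp
  then show ?case using a_suc[OF x, of "Suc k"] k by simp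
qed

end

context cx begin

lemma dir1_inv: assumes x: "x \<in> FF 0 z" and y: "y \<in> FF 1 z" and xy: "x = d 1 z y"
  shows "m < CARD('n) \<Longrightarrow> \<exists>b u. u \<in> SS (CARD('n) - m) (Suc m) z \<and>
            aa z x m = Kc b + dOmega gens d (CARD('n) - m) (Suc m) z u"
proof (induction m)
  case 0
  have "aa z x 0 = iotaF z x" unfolding aa_def by simp
  also have "\<dots> = dOmega gens d CARD('n) 1 z (iotaF z y)" using iota_d[OF y] xy by simp
  finally have "aa z x 0 = Kc 0 + dOmega gens d (CARD('n) - 0) (Suc 0) z (iotaF z y)" by (simp add: Kc_zero)
  moreover have "iotaF z y \<in> SS (CARD('n) - 0) (Suc 0) z" using iota_mem[OF y] by simp
  ultimately show ?case by blast
next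
  case (Suc m)
  then have m: "Suc m < CARD('n)" by simp
  then obtain b u where u: "u \<in> SS (CARD('n) - m) (Suc m) z"
    and a: "aa z x m = Kc b + dOmega gens d (CARD('n) - m) (Suc m) z u" using Suc.IH[OF Suc_lessD[OF m]] by blast
  let ?i = "CARD('n) - Suc m"
  have i1: "1 \<le> CARD('n) - m" "CARD('n) - m \<le> CARD('n)" "CARD('n) - m - 1 = ?i" using m by auto
  let ?X = "Kc u"
  have Xm: "?X \<in> SS ?i (Suc m) z" using K_sp[OF i1(1,2) u] i1(3) by simp
  have "aa z x (Suc m) = s ?i m z (Kc (Kc b + dOmega gens d (CARD('n) - m) (Suc m) z u))"
    using a_suc[OF x] m a by simp
  also have "Kc (Kc b + dOmega gens d (CARD('n) - m) (Suc m) z u) = dOmega gens d ?i (Suc m) z ?X"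
    using dK[OF i1(1,2)] i1(3) by (simp add: Kc_add KK)
  finally have e: "aa z x (Suc m) = s ?i m z (dOmega gens d ?i (Suc m) z ?X)" .
  have h: "?X = dOmega gens d ?i (Suc (Suc m)) z (s ?i (Suc m) z ?X) + s ?i m z (dOmega gens d ?i (Suc m) z ?X)"
    using s_homot[OF _ _ Xm] m by simp
  let ?u = "0 - s ?i (Suc m) z ?X"
  have um: "?u \<in> SS ?i (Suc (Suc m)) z" using O_diff[OF O_zero s_mem[OF _ m Xm]] m by simp
  have "aa z x (Suc m) = Kc u + dOmega gens d ?i (Suc (Suc m)) z ?u"
    unfolding e dOmega_diff dOmega_zero using h by (simp add: algebra_simps)
  then show ?case using um by blast
qed

lemma dir1: assumes x: "x \<in> FF 0 z" and ax: "aug z x = 0" shows "phiF gens s z x = 0"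
proof -
  obtain y where y: "y \<in> FF 1 z" and xy: "x = d 1 z y" using exact0[OF x] ax by blast
  have N: "0 < CARD('n)" by simp
  let ?m = "CARD('n) - 1"
  have m: "?m < CARD('n)" "Suc ?m = CARD('n)" "CARD('n) - ?m = 1" using N by auto
  obtain b u where u: "u \<in> SS 1 CARD('n) z"
    and a: "aa z x ?m = Kc b + dOmega gens d 1 CARD('n) z u" using dir1_inv[OF x y xy m(1)] m by auto
  have i1: "1 \<le> (1::nat)" "1 \<le> CARD('n)" using N by auto
  have Xm: "Kc u \<in> SS 0 CARD('n) z" using K_sp[OF i1 u] by simp
  have "aa z x CARD('n) = s 0 ?m z (Kc (aa z x ?m))" using a_suc[OF x m(1)] m by simp
  also have "Kc (aa z x ?m) = dOmega gens d 0 CARD('n) z (Kc u)"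
    unfolding a using dK[OF i1] by (simp add: Kc_add KK)
  also have "s 0 ?m z \<dots> = Kc u" using s_homot[OF N _ Xm] N by simp
  finally have "aa z x CARD('n) = Kc u" .
  then have "epsF gens z (aa z x CARD('n)) = 0" using epsK[OF u] by simp
  then show ?thesis unfolding phi_eq aa_def by simp
qed

end

context cx begin

lemma core: assumes x: "x \<in> FF 0 z" and k: "k < CARD('n)" and w: "w \<in> SS (CARD('n) - k) (Suc k) z"
    and h: "dOmega gens d (CARD('n) - Suc k) (Suc k) z (aa z x (Suc k) - Kc w) = 0"
  shows "aa z x k - dOmega gens d (CARD('n) - k) (Suc k) z w \<in> SS (CARD('n) - k) k z"
    and "Kc (aa z x k - dOmega gens d (CARD('n) - k) (Suc k) z w) = 0"
proof -
  have i1: "1 \<le> CARD('n) - k" "CARD('n) - k \<le> CARD('n)" "CARD('n) - k - 1 = CARD('n) - Suc k" using k by auto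
  have am: "aa z x k \<in> SS (CARD('n) - k) k z" using a_mem[OF x] k by simp
  have dm: "dOmega gens d (CARD('n) - k) (Suc k) z w \<in> SS (CARD('n) - k) k z"
    using dOmega_sp[OF _ _ w] k by simp
  show "aa z x k - dOmega gens d (CARD('n) - k) (Suc k) z w \<in> SS (CARD('n) - k) k z"
    by (rule O_diff[OF am dm])
  have "dOmega gens d (CARD('n) - Suc k) (Suc k) z (aa z x (Suc k)) = dOmega gens d (CARD('n) - Suc k) (Suc k) z (Kc w)"
    using h unfolding dOmega_diff by simp
  moreover have "dOmega gens d (CARD('n) - Suc k) (Suc k) z (aa z x (Suc k)) = Kc (aa z x k)"
    using a_d[OF x] k by simp
  moreover have "dOmega gens d (CARD('n) - Suc k) (Suc k) z (Kc w) = Kc (dOmega gens d (CARD('n) - k) (Suc k) z w)"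
    using dK[OF i1(1,2)] i1(3) by simp
  ultimately show "Kc (aa z x k - dOmega gens d (CARD('n) - k) (Suc k) z w) = 0"
    unfolding Kc_diff by simp
qed

lemma dir2_ind: assumes x: "x \<in> FF 0 z"
  shows "k < CARD('n) \<Longrightarrow> w \<in> SS (CARD('n) - k) (Suc k) z
     \<Longrightarrow> dOmega gens d (CARD('n) - Suc k) (Suc k) z (aa z x (Suc k) - Kc w) = 0 \<Longrightarrow> aug z x = 0"
proof (induction k arbitrary: w)
  case 0
  have N: "0 < CARD('n)" by simp
  let ?v = "aa z x 0 - dOmega gens d CARD('n) 1 z w"
  have vm: "?v \<in> SS CARD('n) 0 z" and kv: "Kc ?v = 0" using core[OF x "0.prems"] by simp_all
  have "?v = 0" by (rule col_top[OF vm kv])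
  then have e: "aa z x 0 = dOmega gens d CARD('n) 1 z w" by simp
  have wm: "w \<in> SS CARD('n) 1 z" using "0.prems"(2) by simp
  obtain y where y: "y \<in> FF 1 z" and wy: "w = iotaF z y"
    using iota_inv[OF wm] by blast
  have "iotaF z x = iotaF z (d 1 z y)" using e iota_d[OF y] wy unfolding aa_def by simp
  then have "x = d 1 z y" by (rule iota_inj)
  then show ?case using exact0[OF x] y by blast
next
  case (Suc k)
  have k: "Suc k < CARD('n)" by fact
  let ?i = "CARD('n) - Suc k"
  let ?v = "aa z x (Suc k) - dOmega gens d ?i (Suc (Suc k)) z w"
  have vm: "?v \<in> SS ?i (Suc k) z" and kv: "Kc ?v = 0" using core[OF x Suc.prems] by simp_all
  have i1: "1 \<le> ?i" "?i \<le> CARD('n)" "?i < CARD('n)" using k by auto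
  have ve: "?v = Kc (Hc (cz (Suc k) z) ?v)" by (rule col_exact[OF i1(1,2) vm kv])
  let ?w = "Hc (cz (Suc k) z) ?v"
  have wm: "?w \<in> SS (CARD('n) - k) (Suc k) z" using H_sp[OF i1(3) vm] k by (simp add: Suc_diff_Suc)
  have "aa z x (Suc k) - Kc ?w = dOmega gens d ?i (Suc (Suc k)) z w" using ve by (simp add: algebra_simps)
  then have "dOmega gens d (CARD('n) - Suc k) (Suc k) z (aa z x (Suc k) - Kc ?w) = 0"
    using dOmega_dd[of "Suc (Suc k)" ?i z w] k by simp
  then show ?case by (rule Suc.IH[OF Suc_lessD[OF k] wm])
qed

lemma dir2: assumes x: "x \<in> FF 0 z" and p: "phiF gens s z x = 0" shows "aug z x = 0"
proof -
  have N: "0 < CARD('n)" by simp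
  let ?m = "CARD('n) - 1"
  have m: "?m < CARD('n)" "Suc ?m = CARD('n)" "CARD('n) - ?m = 1" using N by auto
  have am: "aa z x CARD('n) \<in> SS 0 CARD('n) z" using a_mem[OF x, of "CARD('n)"] by simp
  have e: "epsF gens z (aa z x CARD('n)) = 0" using p unfolding phi_eq aa_def by simp
  let ?w = "Hc (cz CARD('n) z) (aa z x CARD('n))"
  have ae: "aa z x CARD('n) = Kc ?w" by (rule col_exact0[OF am e])
  have wm: "?w \<in> SS 1 CARD('n) z" using H_sp[OF N am] by simp
  have "dOmega gens d (CARD('n) - Suc ?m) (Suc ?m) z (aa z x (Suc ?m) - Kc ?w) = 0"
    using ae m by (simp add: dOmega_zero)
  moreover have "?w \<in> SS (CARD('n) - ?m) (Suc ?m) z" using wm m by simp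
  ultimately show ?thesis using dir2_ind[OF x m(1)] by blast
qed

end

context cx begin

lemma phi_diff: "x \<in> FF 0 z \<Longrightarrow> y \<in> FF 0 z \<Longrightarrow> phiF gens s z (x - y) = phiF gens s z x - phiF gens s z y"
  using pmor_flat_diff[OF phi_pmor[unfolded freeF_def]] unfolding freeF_def by blast
lemma aug_diff: "x \<in> FF 0 z \<Longrightarrow> y \<in> FF 0 z \<Longrightarrow> aug z (x - y) = aug z x - aug z y"
  using pmor_flat_diff[OF aug_pmor[unfolded freeF_def]] unfolding freeF_def by blast
lemma F_diff: "x \<in> FF j z \<Longrightarrow> y \<in> FF j z \<Longrightarrow> x - y \<in> FF j z"
  unfolding freeF_def by (rule flat_diff)

lemma phi_aug: "x \<in> FF 0 z \<Longrightarrow> y \<in> FF 0 z \<Longrightarrow> phiF gens s z x = phiF gens s z y \<longleftrightarrow> aug z x = aug z y"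
proof -
  assume x: "x \<in> FF 0 z" and y: "y \<in> FF 0 z"
  have m: "x - y \<in> FF 0 z" by (rule F_diff[OF x y])
  have "phiF gens s z x = phiF gens s z y \<longleftrightarrow> phiF gens s z (x - y) = 0" using phi_diff[OF x y] by simp
  also have "\<dots> \<longleftrightarrow> aug z (x - y) = 0" using dir1[OF m] dir2[OF m] by blast
  also have "\<dots> \<longleftrightarrow> aug z x = aug z y" using aug_diff[OF x y] by simp
  finally show ?thesis .
qed

definition hh :: "'n pt \<Rightarrow> (nat \<Rightarrow> 'k) \<Rightarrow> ('b \<Rightarrow> 'k)" where
  "hh z y = aug z (SOME x. x \<in> FF 0 z \<and> phiF gens s z x = y)"

lemma hh_phi: assumes x: "x \<in> FF 0 z" shows "hh z (phiF gens s z x) = aug z x"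
proof -
  let ?x = "SOME x'. x' \<in> FF 0 z \<and> phiF gens s z x' = phiF gens s z x"
  have "?x \<in> FF 0 z \<and> phiF gens s z ?x = phiF gens s z x" by (rule someI[of _ x]) (simp add: x)
  then show ?thesis unfolding hh_def using phi_aug[OF _ x] by blast
qed

lemma F_mono: "x \<in> FF j u \<Longrightarrow> u \<le> w \<Longrightarrow> x \<in> FF j w"
  unfolding sp_freeF by (meson order_trans)

lemma main: "pmor (freeF gens 0) (nuF gens) (phiF gens s)
       \<and> pm_iso (pm_image (freeF gens 0) (nuF gens) (phiF gens s)) M"
proof
  show "pmor (freeF gens 0) (nuF gens) (phiF gens s)" by (rule phi_pmor)
  let ?I = "pm_image (freeF gens 0 :: ('n, nat, 'k) pmod) (nuF gens) (phiF gens s)"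
  have spI: "sp ?I z = phiF gens s z ` FF 0 z" for z unfolding pm_image_def by simp
  have mpI: "mp ?I = mp (nuF gens)" unfolding pm_image_def by simp
  have "pmor ?I M hh"
    unfolding pmor_def pm_linear_def spI mpI
  proof (intro conjI allI impI ballI)
    fix z y assume "y \<in> phiF gens s z ` FF 0 z"
    then obtain x where x: "x \<in> FF 0 z" and y: "y = phiF gens s z x" by blast
    show "hh z y \<in> sp M z" unfolding y hh_phi[OF x] by (rule pmor_mem[OF aug_pmor x])
  next
    fix z y1 y2 assume "y1 \<in> phiF gens s z ` FF 0 z" "y2 \<in> phiF gens s z ` FF 0 z"
    then obtain x1 x2 where x: "x1 \<in> FF 0 z" "x2 \<in> FF 0 z" and y: "y1 = phiF gens s z x1" "y2 = phiF gens s z x2" by blast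
    have xm: "x1 + x2 \<in> FF 0 z" using x unfolding freeF_def by (rule flat_add)
    have "vadd y1 y2 = phiF gens s z (x1 + x2)" unfolding y vadd_eq using pmor_add[OF phi_pmor x] by simp
    then have "hh z (vadd y1 y2) = aug z (x1 + x2)" using hh_phi[OF xm] by simp
    also have "\<dots> = vadd (aug z x1) (aug z x2)" unfolding vadd_eq by (rule pmor_add[OF aug_pmor x])
    finally show "hh z (vadd y1 y2) = vadd (hh z y1) (hh z y2)" unfolding y hh_phi[OF x(1)] hh_phi[OF x(2)] .
  next
    fix z c y assume "y \<in> phiF gens s z ` FF 0 z"
    then obtain x where x: "x \<in> FF 0 z" and y: "y = phiF gens s z x" by blast
    have xm: "(\<lambda>t. c * x t) \<in> FF 0 z" using x unfolding freeF_def by (rule flat_smul)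
    have "vsmul c y = phiF gens s z (\<lambda>t. c * x t)" unfolding y vsmul_def using pmor_smul[OF phi_pmor x] by simp
    then have "hh z (vsmul c y) = aug z (\<lambda>t. c * x t)" using hh_phi[OF xm] by simp
    also have "\<dots> = vsmul c (aug z x)" unfolding vsmul_def by (rule pmor_smul[OF aug_pmor x])
    finally show "hh z (vsmul c y) = vsmul c (hh z y)" unfolding y hh_phi[OF x] .
  next
    fix u w y assume uw: "u \<le> w" and "y \<in> phiF gens s u ` FF 0 u"
    then obtain x where x: "x \<in> FF 0 u" and y: "y = phiF gens s u x" by blast
    have xw: "x \<in> FF 0 w" by (rule F_mono[OF x uw])
    have "mp (nuF gens) u w y = phiF gens s w x"
      using pmor_nat[OF phi_pmor uw x] unfolding y mpF by simp
    then have "hh w (mp (nuF gens) u w y) = aug w x" using hh_phi[OF xw] by simp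
    also have "\<dots> = mp M u w (aug u x)" using pmor_nat[OF aug_pmor uw x] unfolding mpF .
    finally show "hh w (mp (nuF gens) u w y) = mp M u w (hh u y)" unfolding y hh_phi[OF x] .
  qed
  moreover have "bij_betw (hh z) (sp ?I z) (sp M z)" for z
    unfolding spI bij_betw_def
  proof
    show "inj_on (hh z) (phiF gens s z ` FF 0 z)"
    proof (rule inj_onI)
      fix y1 y2 assume "y1 \<in> phiF gens s z ` FF 0 z" "y2 \<in> phiF gens s z ` FF 0 z" and e: "hh z y1 = hh z y2"
      then obtain x1 x2 where x: "x1 \<in> FF 0 z" "x2 \<in> FF 0 z" and y: "y1 = phiF gens s z x1" "y2 = phiF gens s z x2" by blast
      have "aug z x1 = aug z x2" using e unfolding y hh_phi[OF x(1)] hh_phi[OF x(2)] .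
      then show "y1 = y2" unfolding y using phi_aug[OF x] by blast
    qed
    have "hh z ` phiF gens s z ` FF 0 z = aug z ` FF 0 z"
      unfolding image_image using hh_phi by (auto intro: image_cong)
    also have "\<dots> = sp M z" using R2 by blast
    finally show "hh z ` phiF gens s z ` FF 0 z = sp M z" .
  qed
  ultimately show "pm_iso ?I M" unfolding pm_iso_def by blast
qed

end


theorem corollary5p1:
  fixes M :: "('n::{finite,linorder}, 'b, 'k::field) pmod"
    and gens :: "nat \<Rightarrow> ('n \<Rightarrow> int) list"
    and d :: "nat \<Rightarrow> ('n \<Rightarrow> int) \<Rightarrow> (nat \<Rightarrow> 'k) \<Rightarrow> (nat \<Rightarrow> 'k)"
    and aug :: "('n \<Rightarrow> int) \<Rightarrow> (nat \<Rightarrow> 'k) \<Rightarrow> ('b \<Rightarrow> 'k)"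
    and s :: "nat \<Rightarrow> nat \<Rightarrow> ('n \<Rightarrow> int) \<Rightarrow> ('n set \<times> nat \<Rightarrow> 'k) \<Rightarrow> ('n set \<times> nat \<Rightarrow> 'k)"
  assumes "pmodule M"
    and "finite_total_dim M"
    and "free_resolution M CARD('n) gens d aug"
    and "\<forall>i<CARD('n). chain_contraction gens d s i"
  shows "pmor (freeF gens 0) (nuF gens) (phiF gens s)
       \<and> pm_iso (pm_image (freeF gens 0) (nuF gens) (phiF gens s)) M"
proof -
  interpret cx gens d aug s M using assms(3,4) by unfold_locales
  show ?thesis by (rule main)
qed

end
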